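(* Let $N\ge3$, $\beta>-2$, $k_\infty>0$ and $p>p_S(\beta)$. There exists a unique $\bar v\in C^2(0,\infty)$ solving $$\bar v''+\frac{N-1}{r}\bar v'+k_\infty r^{\beta}\max\{\bar v,0\}^p=0\ \ (r>0),\qquad \lim_{r\to\infty}r^{N-2}\bar v(r)=1.$$ Moreover, $\bar r:=\sup\{r>0:\bar v(r)=0\}$ satisfies $0<\bar r<\infty$.
   Context: $p_S(\beta):=\frac{N+2+2\beta}{N-2}$. *)

theory Defs
  imports "HOL-Analysis.Analysis"
begin

definition p_S :: "nat \<Rightarrow> real \<Rightarrow> real" where
  "p_S N \<beta> = (real N + 2 + 2 * \<beta>) / (real N - 2)"

definition C2_on :: "real set \<Rightarrow> (real \<Rightarrow> real) \<Rightarrow> bool" where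
  "C2_on S v \<longleftrightarrow> (\<forall>r\<in>S. v differentiable (at r)) \<and>
                   (\<forall>r\<in>S. deriv v differentiable (at r)) \<and>
                   continuous_on S (deriv (deriv v))"

definition radial_sol :: "nat \<Rightarrow> real \<Rightarrow> real \<Rightarrow> real \<Rightarrow> (real \<Rightarrow> real) \<Rightarrow> bool" where
  "radial_sol N \<beta> k p v \<longleftrightarrow>
     C2_on {0<..} v \<and>
     (\<forall>r>0. deriv (deriv v) r + (real N - 1) / r * deriv v r
             + k * r powr \<beta> * (max (v r) 0) powr p = 0) \<and>
     ((\<lambda>r. r ^ (N - 2) * v r) \<longlongrightarrow> 1) at_top"

end

theory Submission
  imports Defs
begin

definition Jk :: "real \<Rightarrow> (real \<Rightarrow> real) \<Rightarrow> real \<Rightarrow> real" where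
  "Jk m h s = integral {0..s} (\<lambda>t. (1 - (t/s) powr m) * h t)"
definition Gk :: "real \<Rightarrow> (real \<Rightarrow> real) \<Rightarrow> real \<Rightarrow> real" where
  "Gk m h s = integral {0..s} (\<lambda>t. t powr m * h t)"

lemma cont_Ici_sub: fixes h :: "real \<Rightarrow> real" shows "continuous_on {0..} h \<Longrightarrow> continuous_on {0..s} h"
  by (rule continuous_on_subset) auto

lemma cont_tpowr: "m > 0 \<Longrightarrow> S \<subseteq> {0..} \<Longrightarrow> continuous_on S (\<lambda>t::real. t powr m)"
  using continuous_on_powr'[OF continuous_on_id continuous_on_const, of S m] by force

lemma FTC_at:
  fixes f :: "real \<Rightarrow> real"
  assumes "continuous_on {0..} f" "s > 0"
  shows "((\<lambda>u. integral {0..u} f) has_real_derivative f s) (at s)"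
proof -
  have "((\<lambda>u. integral {0..u} f) has_vector_derivative f s) (at s within {0..s+1})"
    using assms by (intro integral_has_vector_derivative cont_Ici_sub) auto
  moreover have "at s within {0..s+1} = at s"
    using assms by (intro at_within_interior) auto
  ultimately show ?thesis by (simp add: has_real_derivative_iff_has_vector_derivative)
qed

lemma kern_bounds:
  fixes m s t :: real
  assumes "m > 0" "0 \<le> t" "t \<le> s"
  shows "0 \<le> 1 - (t/s) powr m" "1 - (t/s) powr m \<le> 1"
proof -
  have "(t/s) powr m \<le> 1" by (rule powr_le1) (use assms in \<open>auto simp: divide_le_eq_1\<close>)
  then show "0 \<le> 1 - (t/s) powr m" by simp
  show "1 - (t/s) powr m \<le> 1" by simp
qed

lemma cont_kern:
  fixes m s :: real and h :: "real \<Rightarrow> real"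
  assumes "m > 0" "s > 0" "continuous_on {0..s} h"
  shows "continuous_on {0..s} (\<lambda>t. (1 - (t/s) powr m) * h t)"
proof -
  have "continuous_on {0..s} (\<lambda>t. (t/s) powr m)"
    by (rule continuous_on_powr') (use assms in \<open>auto intro!: continuous_intros\<close>)
  then show ?thesis by (intro continuous_on_mult continuous_on_diff continuous_on_const assms(3))
qed

lemma cont_Gint:
  fixes m s :: real and h :: "real \<Rightarrow> real"
  assumes "m > 0" "continuous_on {0..s} h"
  shows "continuous_on {0..s} (\<lambda>t. t powr m * h t)"
  by (intro continuous_intros cont_tpowr) (use assms in auto)

lemma J_split:
  assumes "m > 0" "s > 0" "continuous_on {0..} h"
  shows "Jk m h s = integral {0..s} h - s powr (-m) * Gk m h s"
proof -
  have c: "continuous_on {0..s} h" using assms cont_Ici_sub by blast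
  have "Jk m h s = integral {0..s} (\<lambda>t. h t - s powr (-m) * (t powr m * h t))"
    unfolding Jk_def
    by (rule integral_cong) (use assms in \<open>auto simp: powr_divide powr_minus field_simps\<close>)
  also have "\<dots> = integral {0..s} h - integral {0..s} (\<lambda>t. s powr (-m) * (t powr m * h t))"
    by (rule integral_diff) (auto intro!: integrable_continuous_interval continuous_on_mult[OF continuous_on_const] cont_Gint c assms)
  also have "\<dots> = integral {0..s} h - s powr (-m) * Gk m h s"
    unfolding Gk_def by simp
  finally show ?thesis .
qed

lemma G_deriv:
  assumes "m > 0" "s > 0" "continuous_on {0..} h"
  shows "(Gk m h has_real_derivative s powr m * h s) (at s)"
proof -
  have "continuous_on {0..} (\<lambda>t. t powr m * h t)"
    by (intro continuous_intros cont_tpowr) (use assms in auto)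
  from FTC_at[OF this assms(2)] show ?thesis unfolding Gk_def[abs_def] .
qed

lemma J_deriv:
  assumes "m > 0" "s > 0" "continuous_on {0..} h"
  shows "(Jk m h has_real_derivative m * s powr (-m-1) * Gk m h s) (at s)"
proof -
  have d: "((\<lambda>s. integral {0..s} h - s powr (-m) * Gk m h s) has_real_derivative
       m * s powr (-m-1) * Gk m h s) (at s)"
    using assms
    by (auto intro!: derivative_eq_intros FTC_at G_deriv simp: powr_minus powr_diff field_simps)
  show ?thesis
    by (rule has_field_derivative_transform_within_open[OF d, of "{0<..}"])
       (use assms in \<open>auto simp: J_split[OF assms(1) _ assms(3)]\<close>)
qed

lemma integrable_Ici:
  fixes h :: "real \<Rightarrow> real"
  shows "continuous_on {0..} h \<Longrightarrow> h integrable_on {0..s}"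
  by (intro integrable_continuous_interval cont_Ici_sub)

lemma J_diff_bound:
  assumes "m > 0" "s \<ge> 0" "continuous_on {0..} h1" "continuous_on {0..} h2"
  shows "\<bar>Jk m h1 s - Jk m h2 s\<bar> \<le> integral {0..s} (\<lambda>t. \<bar>h1 t - h2 t\<bar>)"
proof (cases "s = 0")
  case True then show ?thesis by (simp add: Jk_def)
next
  case False
  then have s: "s > 0" using assms by auto
  have c1: "continuous_on {0..s} h1" "continuous_on {0..s} h2"
    using assms cont_Ici_sub by blast+
  have "Jk m h1 s - Jk m h2 s = integral {0..s} (\<lambda>t. (1 - (t/s) powr m) * h1 t - (1 - (t/s) powr m) * h2 t)"
    unfolding Jk_def
    by (rule integral_diff[symmetric]) (auto intro!: integrable_continuous_interval cont_kern assms s c1)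
  also have "\<bar>\<dots>\<bar> \<le> integral {0..s} (\<lambda>t. \<bar>h1 t - h2 t\<bar>)"
  proof -
    have k1: "continuous_on {0..s} (\<lambda>t. (1 - (t/s) powr m) * h1 t)" "continuous_on {0..s} (\<lambda>t. (1 - (t/s) powr m) * h2 t)"
      using cont_kern assms s c1 by auto
    have "norm (integral {0..s} (\<lambda>t. (1 - (t/s) powr m) * h1 t - (1 - (t/s) powr m) * h2 t))
          \<le> integral {0..s} (\<lambda>t. \<bar>h1 t - h2 t\<bar>)"
    proof (rule integral_norm_bound_integral)
      show "(\<lambda>t. (1 - (t/s) powr m) * h1 t - (1 - (t/s) powr m) * h2 t) integrable_on {0..s}"
        by (intro integrable_continuous_interval continuous_on_diff k1)
      show "(\<lambda>t. \<bar>h1 t - h2 t\<bar>) integrable_on {0..s}"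
        by (auto intro!: integrable_continuous_interval c1 continuous_intros)
      fix t assume t: "t \<in> {0..s}"
      have k: "0 \<le> 1 - (t/s) powr m" "1 - (t/s) powr m \<le> 1" using kern_bounds[of m t s] assms t by auto
      have "norm ((1 - (t/s) powr m) * h1 t - (1 - (t/s) powr m) * h2 t) = (1 - (t/s) powr m) * \<bar>h1 t - h2 t\<bar>"
        using k by (simp add: abs_mult right_diff_distrib[symmetric])
      also have "\<dots> \<le> \<bar>h1 t - h2 t\<bar>" using k by (simp add: mult_left_le_one_le)
      finally show "norm ((1 - (t/s) powr m) * h1 t - (1 - (t/s) powr m) * h2 t) \<le> \<bar>h1 t - h2 t\<bar>" .
    qed
    then show ?thesis by simp
  qed
  finally show ?thesis .
qed

lemma J_nonneg:
  assumes "m > 0" "s \<ge> 0" "continuous_on {0..} h" "\<And>t. t \<ge> 0 \<Longrightarrow> h t \<ge> 0"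
  shows "Jk m h s \<ge> 0"
proof (cases "s = 0")
  case True then show ?thesis by (simp add: Jk_def)
next
  case False
  then have s: "s > 0" using assms by auto
  show ?thesis unfolding Jk_def
    by (rule integral_nonneg) (auto intro!: integrable_continuous_interval cont_kern assms s cont_Ici_sub[OF assms(3)]
         mult_nonneg_nonneg kern_bounds)
qed

lemma J_cong:
  assumes "\<And>t. t \<ge> 0 \<Longrightarrow> h1 t = h2 t"
  shows "Jk m h1 s = Jk m h2 s"
  unfolding Jk_def by (rule integral_cong) (use assms in auto)

lemma G_cong:
  assumes "\<And>t. t \<ge> 0 \<Longrightarrow> h1 t = h2 t"
  shows "Gk m h1 s = Gk m h2 s"
  unfolding Gk_def by (rule integral_cong) (use assms in auto)

lemma J_cont:
  assumes "m > 0" "continuous_on {0..} h"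
  shows "continuous_on {0..} (Jk m h)"
proof -
  obtain B where B: "B \<ge> 0" "\<And>x. x \<in> {0..1} \<Longrightarrow> norm (h x) \<le> B"
    using continuous_on_compact_bound[of "{0..1}" h] assms cont_Ici_sub by blast
  have at0: "(Jk m h \<longlongrightarrow> 0) (at 0 within {0..})"
  proof (rule Lim_null_comparison)
    show "((\<lambda>s. B * s) \<longlongrightarrow> 0) (at 0 within {0..})"
      by (auto intro!: tendsto_eq_intros)
    have "\<forall>\<^sub>F s in at (0::real) within {0..}. s \<in> {0..1}"
    proof -
      have "\<forall>\<^sub>F s in at 0 within {0..}. s \<in> {0..}" by (simp add: eventually_at_filter)
      moreover have "\<forall>\<^sub>F s in at (0::real) within {0..}. s < 1"
        by (rule order_tendstoD[OF tendsto_ident_at]) simp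
      ultimately show ?thesis by eventually_elim auto
    qed
    then show "\<forall>\<^sub>F s in at 0 within {0..}. norm (Jk m h s) \<le> B * s"
    proof eventually_elim
      case (elim s)
      have "\<bar>Jk m h s - Jk m (\<lambda>_. 0) s\<bar> \<le> integral {0..s} (\<lambda>t. \<bar>h t - 0\<bar>)"
        using elim assms by (intro J_diff_bound) auto
      also have "\<dots> \<le> integral {0..s} (\<lambda>t. B)"
        using elim B assms
        by (intro integral_le) (auto intro!: integrable_continuous_interval continuous_intros cont_Ici_sub)
      also have "\<dots> = B * s" using elim by simp
      finally show ?case by (simp add: Jk_def)
    qed
  qed
  show ?thesis
    unfolding continuous_on_eq_continuous_within
  proof
    fix x :: real assume x: "x \<in> {0..}"
    show "continuous (at x within {0..}) (Jk m h)"
    proof (cases "x = 0")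
      case True
      then show ?thesis using at0 by (simp add: continuous_within Jk_def)
    next
      case False
      then have "x > 0" using x by auto
      from J_deriv[OF assms(1) this assms(2)] have "isCont (Jk m h) x"
        by (rule DERIV_isCont)
      then show ?thesis by (rule continuous_at_imp_continuous_at_within)
    qed
  qed
qed

lemma integral_pow_scaled:
  fixes B M s :: real
  assumes "s \<ge> 0"
  shows "((\<lambda>t. B * (M*t)^n / fact n) has_integral B * (M^n * s^(Suc n)) / fact (Suc n)) {0..s}"
proof -
  have "((\<lambda>t. (B * M^n / fact (Suc n)) * t^(Suc n)) has_real_derivative B * (M*t)^n / fact n) (at t within {0..s})" for t
  proof -
    have "((\<lambda>t. t^(Suc n)) has_real_derivative real (Suc n) * t^n) (at t)" using DERIV_pow[of "Suc n" t] by simp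
    then have "((\<lambda>t. (B * M^n / fact (Suc n)) * t^(Suc n)) has_real_derivative (B * M^n / fact (Suc n)) * (real (Suc n) * t^n)) (at t)"
      by (rule DERIV_cmult)
    moreover have "(B * M^n / fact (Suc n)) * (real (Suc n) * t^n) = B * (M*t)^n / fact n"
      by (simp add: power_mult_distrib del: of_nat_Suc)
    ultimately show ?thesis by (auto intro: has_field_derivative_at_within)
  qed
  then have "((\<lambda>t. B * (M*t)^n / fact n) has_integral
      (B * M^n / fact (Suc n)) * s^(Suc n) - (B * M^n / fact (Suc n)) * 0^(Suc n)) {0..s}"
    using assms by (intro fundamental_theorem_of_calculus) (auto simp: has_real_derivative_iff_has_vector_derivative)
  then show ?thesis by (simp add: field_simps)
qed

lemma iter_bound:
  fixes d :: "nat \<Rightarrow> real \<Rightarrow> real"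
  assumes cont: "\<And>n. continuous_on {0..T} (d n)"
    and d0: "\<And>s. s \<in> {0..T} \<Longrightarrow> d 0 s \<le> B"
    and dS: "\<And>n s. s \<in> {0..T} \<Longrightarrow> d (Suc n) s \<le> M * integral {0..s} (d n)"
    and M: "M \<ge> 0"
  shows "s \<in> {0..T} \<Longrightarrow> d n s \<le> B * (M * s)^n / fact n"
proof (induction n arbitrary: s)
  case 0 then show ?case using d0 by simp
next
  case (Suc n)
  have sub: "{0..s} \<subseteq> {0..T}" using Suc.prems by auto
  have "d (Suc n) s \<le> M * integral {0..s} (d n)" using dS Suc.prems by blast
  also have "integral {0..s} (d n) \<le> integral {0..s} (\<lambda>t. B * (M*t)^n / fact n)"
  proof (rule integral_le)
    show "d n integrable_on {0..s}"
      by (rule integrable_continuous_interval, rule continuous_on_subset[OF cont sub])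
    show "(\<lambda>t. B * (M*t)^n / fact n) integrable_on {0..s}"
      using integral_pow_scaled[of s B M n] Suc.prems by auto
    fix t assume "t \<in> {0..s}"
    then show "d n t \<le> B * (M*t)^n / fact n" using Suc.IH sub by blast
  qed
  then have "M * integral {0..s} (d n) \<le> M * integral {0..s} (\<lambda>t. B * (M*t)^n / fact n)"
    using M by (rule mult_left_mono)
  also have "integral {0..s} (\<lambda>t. B * (M*t)^n / fact n) = B * (M^n * s^(Suc n)) / fact (Suc n)"
    using Suc.prems by (intro integral_unique integral_pow_scaled) auto
  also have "M * (B * (M^n * s^(Suc n)) / fact (Suc n)) = B * (M * s)^(Suc n) / fact (Suc n)"
    by (simp add: power_mult_distrib)
  finally show ?case .
qed

definition clamp01 :: "real \<Rightarrow> real" where "clamp01 x = min (max x 0) 1"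
definition gt :: "real \<Rightarrow> real \<Rightarrow> real" where "gt p x = clamp01 x powr p"

lemma powr_lip01:
  fixes p x y :: real
  assumes "p \<ge> 1" "0 \<le> y" "y \<le> x" "x \<le> 1"
  shows "x powr p - y powr p \<le> p * (x - y)"
proof (cases "y = x")
  case True then show ?thesis by simp
next
  case False
  then have yx: "y < x" using assms by auto
  have c: "continuous_on {y..x} (\<lambda>t. t powr p)"
    by (rule cont_tpowr) (use assms in auto)
  have "(\<lambda>t. t powr p) differentiable (at z)" if "y < z" for z
    using has_real_derivative_powr[of z p] that assms
    by (auto simp: real_differentiable_def)
  from MVT[OF yx c this] obtain l z where z: "y < z" "z < x"
    "((\<lambda>t. t powr p) has_real_derivative l) (at z)" "x powr p - y powr p = (x - y) * l"
    by blast
  have "l = p * z powr (p - 1)"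
    using DERIV_unique[OF z(3) has_real_derivative_powr[of z p]] z assms by auto
  moreover have "z powr (p - 1) \<le> 1" by (rule powr_le1) (use z assms in auto)
  ultimately have "l \<le> p" using assms by (simp add: mult_left_le_one_le)
  then show ?thesis using z yx by (simp add: mult.commute mult_left_mono)
qed

lemma clamp01_props: "0 \<le> clamp01 x" "clamp01 x \<le> 1" "\<bar>clamp01 x - clamp01 y\<bar> \<le> \<bar>x - y\<bar>"
  "x \<le> y \<Longrightarrow> clamp01 x \<le> clamp01 y"
  by (auto simp: clamp01_def)

lemma gt_lip:
  assumes "p \<ge> 1"
  shows "\<bar>gt p x - gt p y\<bar> \<le> p * \<bar>x - y\<bar>"
proof -
  have key: "\<bar>gt p x - gt p y\<bar> \<le> p * \<bar>x - y\<bar>" if "clamp01 y \<le> clamp01 x" for x y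
  proof -
    have "gt p y \<le> gt p x" unfolding gt_def
      by (rule powr_mono2) (use that assms clamp01_props in auto)
    then have "\<bar>gt p x - gt p y\<bar> = gt p x - gt p y" by simp
    also have "\<dots> \<le> p * (clamp01 x - clamp01 y)" unfolding gt_def
      by (rule powr_lip01) (use that assms clamp01_props in auto)
    also have "\<dots> \<le> p * \<bar>x - y\<bar>"
      using clamp01_props(3)[of x y] assms by (intro mult_left_mono) auto
    finally show ?thesis .
  qed
  show ?thesis
  proof (cases "clamp01 y \<le> clamp01 x")
    case True then show ?thesis using key by blast
  next
    case False
    then have "clamp01 x \<le> clamp01 y" by simp
    then show ?thesis using key by (metis abs_minus_commute)
  qed
qed

lemma gt_nonneg: "gt p x \<ge> 0" by (simp add: gt_def)

lemma gt_le1: "p \<ge> 0 \<Longrightarrow> gt p x \<le> 1"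
  unfolding gt_def by (rule powr_le1) (use clamp01_props in auto)

lemma gt_eq: "x \<le> 1 \<Longrightarrow> gt p x = max x 0 powr p"
  by (simp add: gt_def clamp01_def)

lemma cont_clamp01: "continuous_on S clamp01"
  unfolding clamp01_def[abs_def] by (intro continuous_intros)

lemma cont_gt:
  assumes "p > 0" "continuous_on S f"
  shows "continuous_on S (\<lambda>x. gt p (f x))"
  unfolding gt_def
  by (rule continuous_on_powr') (auto intro!: continuous_on_compose2[OF cont_clamp01 assms(2)] simp: assms clamp01_props)

lemma cont_from_intervals:
  fixes f :: "real \<Rightarrow> real"
  assumes "\<And>T. T > 0 \<Longrightarrow> continuous_on {0..T} f"
  shows "continuous_on {0..} f"
  unfolding continuous_on_eq_continuous_within
proof
  fix x :: real assume x: "x \<in> {0..}"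
  have "continuous (at x within {0..x+1}) f"
    using assms[of "x+1"] x by (auto simp: continuous_on_eq_continuous_within)
  moreover have "at x within {0..x+1} = at x within {0..}"
    by (rule at_within_nhd[of _ "{..<x+1}"]) auto
  ultimately show "continuous (at x within {0..}) f" by simp
qed


locale radl =
  fixes N :: nat and \<beta> k p :: real
  assumes N3: "N \<ge> 3" and beta: "\<beta> > -2" and kpos: "k > 0" and pS: "p > p_S N \<beta>"
begin

definition "a = (real N - 2) * p - real N - \<beta>"
definition "m = (real N - 2) / a"
definition "K = k / a^2"
definition g :: "real \<Rightarrow> real" where "g x = max x 0 powr p"

lemma pS': "(real N - 2) * p > real N + 2 + 2 * \<beta>"
proof -
  have "real N - 2 > 0" using N3 by auto
  then show ?thesis using pS by (simp add: p_S_def divide_less_eq mult.commute)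
qed

lemma a_pos: "a > 0" using pS' beta by (simp add: a_def)
lemma N2: "real N - 2 > 0" using N3 by auto
lemma m_pos: "m > 0" using a_pos N2 by (simp add: m_def)
lemma K_pos: "K > 0" using a_pos kpos by (simp add: K_def)
lemma p_gt1: "p > 1"
proof -
  have "(real N - 2) * p > (real N - 2) * 1" using pS' beta by simp
  then show ?thesis using N2 by simp
qed
lemma am: "a * m = real N - 2" using a_pos by (simp add: m_def)
lemma subcrit: "m * (p - 1) < 2"
proof -
  have "(real N - 2) * (p - 1) < 2 * a" using pS' by (simp add: a_def algebra_simps)
  then show ?thesis using a_pos by (simp add: m_def field_simps)
qed

lemma g_nonneg: "g x \<ge> 0" by (simp add: g_def)
lemma g_cont: "continuous_on S (\<lambda>x. g (f x))" if "continuous_on S f"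
  unfolding g_def
  by (rule continuous_on_powr') (use that p_gt1 in \<open>auto intro!: continuous_intros\<close>)

definition PhiT :: "(real \<Rightarrow> real) \<Rightarrow> real \<Rightarrow> real" where
  "PhiT w s = 1 - (K/m) * Jk m (\<lambda>t. gt p (w t)) s"

definition Wi :: "nat \<Rightarrow> real \<Rightarrow> real" where "Wi n = (PhiT ^^ n) (\<lambda>_. 1)"

lemma Wi_0: "Wi 0 = (\<lambda>_. 1)" by (simp add: Wi_def)
lemma Wi_Suc: "Wi (Suc n) = PhiT (Wi n)" by (simp add: Wi_def)

lemma PhiT_cont: "continuous_on {0..} w \<Longrightarrow> continuous_on {0..} (PhiT w)"
  unfolding PhiT_def[abs_def]
  by (intro continuous_intros J_cont m_pos cont_gt) (use p_gt1 in auto)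

lemma Wi_cont: "continuous_on {0..} (Wi n)"
  by (induction n) (auto simp: Wi_0 Wi_Suc intro: PhiT_cont continuous_intros)

lemma PhiT_diff:
  assumes "continuous_on {0..} w1" "continuous_on {0..} w2" "s \<ge> 0"
  shows "\<bar>PhiT w1 s - PhiT w2 s\<bar> \<le> (K/m) * p * integral {0..s} (\<lambda>t. \<bar>w1 t - w2 t\<bar>)"
proof -
  have c: "continuous_on {0..} (\<lambda>t. gt p (w1 t))" "continuous_on {0..} (\<lambda>t. gt p (w2 t))"
    using assms p_gt1 by (auto intro: cont_gt)
  have "\<bar>PhiT w1 s - PhiT w2 s\<bar> = (K/m) * \<bar>Jk m (\<lambda>t. gt p (w1 t)) s - Jk m (\<lambda>t. gt p (w2 t)) s\<bar>"
  proof -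
    have "PhiT w1 s - PhiT w2 s = (K/m) * (Jk m (\<lambda>t. gt p (w2 t)) s - Jk m (\<lambda>t. gt p (w1 t)) s)"
      by (simp add: PhiT_def algebra_simps)
    then show ?thesis using K_pos m_pos by (simp add: abs_mult abs_minus_commute)
  qed
  also have "\<dots> \<le> (K/m) * integral {0..s} (\<lambda>t. \<bar>gt p (w1 t) - gt p (w2 t)\<bar>)"
    using K_pos m_pos assms c by (intro mult_left_mono J_diff_bound) auto
  also have "integral {0..s} (\<lambda>t. \<bar>gt p (w1 t) - gt p (w2 t)\<bar>) \<le> integral {0..s} (\<lambda>t. p * \<bar>w1 t - w2 t\<bar>)"
    using c assms
    by (intro integral_le gt_lip integrable_continuous_interval cont_Ici_sub continuous_intros)
       (use p_gt1 in auto)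
  then have "(K/m) * integral {0..s} (\<lambda>t. \<bar>gt p (w1 t) - gt p (w2 t)\<bar>) \<le> (K/m) * integral {0..s} (\<lambda>t. p * \<bar>w1 t - w2 t\<bar>)"
    using K_pos m_pos by (intro mult_left_mono) auto
  also have "\<dots> = (K/m) * p * integral {0..s} (\<lambda>t. \<bar>w1 t - w2 t\<bar>)" by simp
  finally show ?thesis .
qed

lemma Wi_diff_bound:
  assumes "s \<in> {0..T}"
  shows "\<bar>Wi (Suc n) s - Wi n s\<bar> \<le> (K/m*T) * ((K/m*p) * s)^n / fact n"
proof (rule iter_bound[where d = "\<lambda>n s. \<bar>Wi (Suc n) s - Wi n s\<bar>", OF _ _ _ _ assms])
  show "continuous_on {0..T} (\<lambda>s. \<bar>Wi (Suc n) s - Wi n s\<bar>)" for n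
    by (intro continuous_intros cont_Ici_sub Wi_cont)
  show "0 \<le> K/m*p" using K_pos m_pos p_gt1 by auto
  fix s assume s: "s \<in> {0..T}"
  show "\<bar>Wi (Suc (Suc n)) s - Wi (Suc n) s\<bar> \<le> K/m*p * integral {0..s} (\<lambda>s. \<bar>Wi (Suc n) s - Wi n s\<bar>)" for n
    using PhiT_diff[OF Wi_cont Wi_cont, of s "Suc n" n] s by (simp add: Wi_Suc[of "Suc n"] Wi_Suc[of n])
  have "\<bar>Jk m (\<lambda>t. gt p 1) s - Jk m (\<lambda>_. 0) s\<bar> \<le> integral {0..s} (\<lambda>t. \<bar>gt p 1 - 0\<bar>)"
    using s m_pos by (intro J_diff_bound) auto
  also have "\<dots> \<le> integral {0..s} (\<lambda>t. 1)"
    using p_gt1 by (intro integral_le) (auto simp: gt_nonneg gt_le1)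
  also have "\<dots> = s" using s by simp
  finally have "\<bar>Jk m (\<lambda>t. gt p 1) s\<bar> \<le> s" by (simp add: Jk_def)
  then have "(K/m) * \<bar>Jk m (\<lambda>t. gt p 1) s\<bar> \<le> (K/m) * T"
    using s K_pos m_pos by (intro mult_left_mono) auto
  then show "\<bar>Wi (Suc 0) s - Wi 0 s\<bar> \<le> K/m*T"
    using K_pos m_pos by (simp add: Wi_Suc Wi_0 PhiT_def abs_mult)
qed

definition W :: "real \<Rightarrow> real" where "W x = 1 + (\<Sum>i. Wi (Suc i) x - Wi i x)"

lemma Wi_tel: "Wi n x = 1 + (\<Sum>i<n. Wi (Suc i) x - Wi i x)"
  using sum_lessThan_telescope[of "\<lambda>i. Wi i x" n] by (simp add: Wi_0)

lemma Wi_unif: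
  assumes "T \<ge> 0"
  shows "uniform_limit {0..T} Wi W sequentially"
proof -
  define c where "c = K/m*p*T"
  have c0: "c \<ge> 0" using K_pos m_pos p_gt1 assms by (simp add: c_def)
  have bnd: "norm (Wi (Suc i) x - Wi i x) \<le> (K/m*T) * (inverse (fact i) * c^i)" if "x \<in> {0..T}" for i x
  proof -
    have "\<bar>Wi (Suc i) x - Wi i x\<bar> \<le> (K/m*T) * ((K/m*p) * x)^i / fact i"
      using Wi_diff_bound that by blast
    also have "\<dots> \<le> (K/m*T) * c^i / fact i"
    proof -
      have "0 \<le> K/m*p" using K_pos m_pos p_gt1 by auto
      have A: "(K/m*p) * x \<le> (K/m*p) * T" by (rule mult_left_mono) (use that \<open>0 \<le> K/m*p\<close> in auto)
      have B: "0 \<le> (K/m*p) * x" using mult_nonneg_nonneg[OF \<open>0 \<le> K/m*p\<close>, of x] that by auto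
      from A B have "(K/m*p) * x \<le> c" "0 \<le> (K/m*p) * x" unfolding c_def by auto
      then have "((K/m*p) * x)^i \<le> c^i" by (intro power_mono) auto
      moreover have "0 \<le> K/m*T" using K_pos m_pos assms by auto
      ultimately show ?thesis by (intro divide_right_mono mult_left_mono) auto
    qed
    finally show ?thesis by (simp add: divide_inverse mult_ac)
  qed
  have sm: "summable (\<lambda>i. (K/m*T) * (inverse (fact i) * c^i))"
    by (intro summable_mult summable_exp)
  have UL: "uniform_limit {0..T} (\<lambda>n x. \<Sum>i<n. Wi (Suc i) x - Wi i x) (\<lambda>x. \<Sum>i. Wi (Suc i) x - Wi i x) sequentially"
    by (rule Weierstrass_m_test[OF bnd sm])
  have "uniform_limit {0..T} (\<lambda>n x. 1 + (\<Sum>i<n. Wi (Suc i) x - Wi i x)) (\<lambda>x. 1 + (\<Sum>i. Wi (Suc i) x - Wi i x)) sequentially"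
    using uniform_limit_add[OF uniform_limit_const[where S="{0..T}" and c="\<lambda>_. 1::real" and f=sequentially] UL] by simp
  then show ?thesis
    by (subst uniform_limit_cong'[where g = "\<lambda>n x. 1 + (\<Sum>i<n. Wi (Suc i) x - Wi i x)" and i = "\<lambda>x. 1 + (\<Sum>i. Wi (Suc i) x - Wi i x)"])
       (auto simp: W_def Wi_tel[symmetric])
qed

lemma W_cont: "continuous_on {0..} W"
proof (rule cont_from_intervals)
  fix T :: real assume "T > 0"
  show "continuous_on {0..T} W"
    by (rule uniform_limit_theorem[OF always_eventually Wi_unif]) (use \<open>T > 0\<close> in \<open>auto intro: cont_Ici_sub Wi_cont\<close>)
qed

lemma W_fix:
  assumes s: "s \<ge> 0"
  shows "W s = PhiT W s"
proof -
  define T where "T = s + 1"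
  have T: "T \<ge> 0" "s \<in> {0..T}" using s by (auto simp: T_def)
  have UL: "uniform_limit {0..T} Wi W sequentially" using Wi_unif T by blast
  have "(\<lambda>n. Wi n s) \<longlonglongrightarrow> W s" using tendsto_uniform_limitI[OF UL T(2)] .
  then have l1: "(\<lambda>n. Wi (Suc n) s) \<longlonglongrightarrow> W s" by (rule LIMSEQ_Suc)
  have l2: "(\<lambda>n. Wi (Suc n) s) \<longlonglongrightarrow> PhiT W s"
  proof (rule tendstoI)
    fix e :: real assume e: "e > 0"
    define C where "C = K/m*p*T + 1"
    have "0 \<le> K/m*p*T" using K_pos m_pos p_gt1 T by (intro mult_nonneg_nonneg divide_nonneg_nonneg) auto
    then have C: "C > 0" by (simp add: C_def)
    have "\<forall>\<^sub>F n in sequentially. \<forall>x\<in>{0..T}. dist (Wi n x) (W x) < e / C"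
      using UL e C unfolding uniform_limit_iff by auto
    then show "\<forall>\<^sub>F n in sequentially. dist (Wi (Suc n) s) (PhiT W s) < e"
    proof eventually_elim
      case (elim n)
      have bd: "\<bar>Wi n t - W t\<bar> \<le> e/C" if "t \<in> {0..s}" for t
      proof -
        have "t \<in> {0..T}" using that T by auto
        then have "dist (Wi n t) (W t) < e/C" using elim by blast
        then show ?thesis by (simp add: dist_real_def)
      qed
      have I: "integral {0..s} (\<lambda>t. \<bar>Wi n t - W t\<bar>) \<le> integral {0..s} (\<lambda>t. e / C)"
        using bd
        by (intro integral_le integrable_continuous_interval cont_Ici_sub continuous_intros Wi_cont W_cont)
           (auto simp: dist_real_def)
      have "\<bar>PhiT (Wi n) s - PhiT W s\<bar> \<le> (K/m) * p * integral {0..s} (\<lambda>t. \<bar>Wi n t - W t\<bar>)"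
        by (rule PhiT_diff[OF Wi_cont W_cont s])
      also have "\<dots> \<le> (K/m) * p * integral {0..s} (\<lambda>t. e / C)"
        using K_pos m_pos p_gt1 by (intro mult_left_mono[OF I]) auto
      also have "\<dots> = (K/m) * p * (s * (e / C))" using s by simp
      also have "\<dots> = (K/m*p* s) * e / C" by simp
      also have "\<dots> < e"
      proof -
        have "0 \<le> K/m*p" using K_pos m_pos p_gt1 by simp
        then have "K/m*p* s \<le> K/m*p*T" using T by (intro mult_left_mono) auto
        then have "K/m*p* s < C" by (simp add: C_def)
        then have "(K/m*p* s) * e < C * e" using e by (intro mult_strict_right_mono)
        moreover have "\<And>X. X < C * e \<Longrightarrow> X / C < e" using C by (simp add: pos_divide_less_eq mult.commute)
        ultimately show ?thesis by blast
      qed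
      finally show ?case by (simp add: Wi_Suc dist_real_def)
    qed
  qed
  show ?thesis using LIMSEQ_unique[OF l1 l2] .
qed

end

context radl begin

definition isol :: "(real \<Rightarrow> real) \<Rightarrow> bool" where
  "isol X \<longleftrightarrow> continuous_on {0..} X \<and> (\<forall>s\<ge>0. X s = 1 - (K/m) * Jk m (\<lambda>t. g (X t)) s)"

lemma isol_le1:
  assumes "isol X" "s \<ge> 0" shows "X s \<le> 1"
proof -
  have "Jk m (\<lambda>t. g (X t)) s \<ge> 0"
    using assms m_pos by (intro J_nonneg g_cont) (auto simp: isol_def g_nonneg)
  then have "(K/m) * Jk m (\<lambda>t. g (X t)) s \<ge> 0" using K_pos m_pos by simp
  then show ?thesis using assms by (auto simp: isol_def)
qed

lemma isol_PhiT:
  assumes "isol X" "s \<ge> 0" shows "X s = PhiT X s"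
proof -
  have "Jk m (\<lambda>t. g (X t)) s = Jk m (\<lambda>t. gt p (X t)) s"
    by (rule J_cong) (use isol_le1[OF assms(1)] in \<open>auto simp: gt_eq g_def\<close>)
  then show ?thesis using assms by (simp add: isol_def PhiT_def)
qed

lemma W_le1: "s \<ge> 0 \<Longrightarrow> W s \<le> 1"
proof -
  assume s: "s \<ge> 0"
  have "Jk m (\<lambda>t. gt p (W t)) s \<ge> 0"
    using s m_pos p_gt1 by (intro J_nonneg cont_gt W_cont) (auto simp: gt_nonneg)
  then have "(K/m) * Jk m (\<lambda>t. gt p (W t)) s \<ge> 0" using K_pos m_pos by simp
  then show ?thesis using W_fix[OF s] by (simp add: PhiT_def)
qed

lemma W_isol: "isol W"
  unfolding isol_def
proof (intro conjI allI impI W_cont)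
  fix s :: real assume s: "s \<ge> 0"
  have "Jk m (\<lambda>t. g (W t)) s = Jk m (\<lambda>t. gt p (W t)) s"
    by (rule J_cong) (use W_le1 in \<open>auto simp: gt_eq g_def\<close>)
  then show "W s = 1 - K / m * Jk m (\<lambda>t. g (W t)) s" using W_fix[OF s] by (simp add: PhiT_def)
qed

lemma isol_unique:
  assumes X: "isol X" and Y: "isol Y" and s: "s \<ge> 0"
  shows "X s = Y s"
proof -
  have cX: "continuous_on {0..} X" and cY: "continuous_on {0..} Y" using X Y by (auto simp: isol_def)
  have cd: "continuous_on {0..s} (\<lambda>t. \<bar>X t - Y t\<bar>)"
    by (intro continuous_intros cont_Ici_sub cX cY)
  obtain B where B: "B \<ge> 0" "\<And>t. t \<in> {0..s} \<Longrightarrow> norm (\<bar>X t - Y t\<bar>) \<le> B"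
    using continuous_on_compact_bound[OF compact_Icc cd] by blast
  define M where "M = K/m*p"
  have M: "M \<ge> 0" using K_pos m_pos p_gt1 by (simp add: M_def)
  have bnd: "\<bar>X s - Y s\<bar> \<le> B * (M * s)^n / fact n" for n
  proof (rule iter_bound[where d = "\<lambda>n t. \<bar>X t - Y t\<bar>" and T = s, OF _ _ _ M])
    show "continuous_on {0..s} (\<lambda>t. \<bar>X t - Y t\<bar>)" by (rule cd)
    show "\<bar>X t - Y t\<bar> \<le> B" if "t \<in> {0..s}" for t using B that by auto
    show "\<bar>X t - Y t\<bar> \<le> M * integral {0..t} (\<lambda>t. \<bar>X t - Y t\<bar>)" if "t \<in> {0..s}" for t
      using PhiT_diff[OF cX cY, of t] that isol_PhiT[OF X, of t] isol_PhiT[OF Y, of t]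
      by (simp add: M_def)
    show "s \<in> {0..s}" using s by simp
  qed
  have "(\<lambda>n. B * (inverse (fact n) * (M * s)^n)) \<longlonglongrightarrow> B * 0"
    by (intro tendsto_mult tendsto_const summable_LIMSEQ_zero summable_exp)
  then have lim: "(\<lambda>n. B * (M * s)^n / fact n) \<longlonglongrightarrow> 0" by (simp add: divide_inverse mult_ac)
  have "\<bar>X s - Y s\<bar> \<le> 0"
    by (rule LIMSEQ_le_const[OF lim]) (use bnd in auto)
  then show ?thesis by simp
qed

lemma isol_cont: "isol X \<Longrightarrow> continuous_on {0..} (\<lambda>t. g (X t))"
  by (intro g_cont) (simp add: isol_def)

lemma isol_deriv:
  assumes X: "isol X" and s: "s > 0"
  shows "(X has_real_derivative -K * s powr (-m-1) * Gk m (\<lambda>t. g (X t)) s) (at s)"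
proof -
  have d: "((\<lambda>s. 1 - (K/m) * Jk m (\<lambda>t. g (X t)) s) has_real_derivative
        -(K/m) * (m * s powr (-m-1) * Gk m (\<lambda>t. g (X t)) s)) (at s)"
    using J_deriv[OF m_pos s isol_cont[OF X]]
    by (auto intro!: derivative_eq_intros)
  have "-(K/m) * (m * s powr (-m-1) * Gk m (\<lambda>t. g (X t)) s) = -K * s powr (-m-1) * Gk m (\<lambda>t. g (X t)) s"
    using m_pos by simp
  with d have d': "((\<lambda>s. 1 - (K/m) * Jk m (\<lambda>t. g (X t)) s) has_real_derivative
        -K * s powr (-m-1) * Gk m (\<lambda>t. g (X t)) s) (at s)" by simp
  show ?thesis
    by (rule has_field_derivative_transform_within_open[OF d', of "{0<..}"])
       (use s X in \<open>auto simp: isol_def\<close>)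
qed

lemma isol_G_deriv:
  assumes X: "isol X" and s: "s > 0"
  shows "(Gk m (\<lambda>t. g (X t)) has_real_derivative s powr m * g (X s)) (at s)"
  by (rule G_deriv[OF m_pos s isol_cont[OF X]])

lemma isol_0: "isol X \<Longrightarrow> X 0 = 1"
  by (simp add: isol_def Jk_def)

end

lemma alg_D1:
  fixes n R A r Xs G a K :: real
  assumes "R > 0" "A > 0" "r > 0"
  shows "(2 - n) * (1 / (R * r)) * Xs + - K * (R * A) * G * (- a * (1 / (A * r))) * (1 / R)
       = (2 - n) * (1 / (R * r)) * Xs + a * K * (1 / r) * G"
  using assms by (simp add: field_simps)

lemma alg_D2:
  fixes n R A r Xs G gg a K k :: real
  assumes "R > 0" "A > 0" "r > 0" "k = a * a * K"
  shows "(2 - n) * ((1 - n) * (1 / (R * r^2))) * Xs +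
    - K * (R * A) * G * (- a * (1 / (A * r))) * ((2 - n) * (1 / (R * r))) +
    (a * K * (- 1 * (1 / r^2)) * G + (1 / R) * gg * (- a * (1 / (A * r))) * (a * K * (1 / r)))
    = (n - 2) * (n - 1) / (R * r^2) * Xs - (n - 1) * a * K / r^2 * G - k / (R * r^2 * A) * gg"
proof -
  have 1: "(2 - n) * ((1 - n) * (1 / (R * r^2))) * Xs = (n - 2) * (n - 1) / (R * r^2) * Xs"
    by (simp add: field_simps)
  have 2: "- K * (R * A) * G * (- a * (1 / (A * r))) * ((2 - n) * (1 / (R * r))) = (2 - n) * a * K / r^2 * G"
    using assms by (simp add: field_simps power2_eq_square)
  have 3: "a * K * (- 1 * (1 / r^2)) * G = - a * K / r^2 * G" by simp
  have 4: "(1 / R) * gg * (- a * (1 / (A * r))) * (a * K * (1 / r)) = - k / (R * r^2 * A) * gg"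
    using assms by (simp add: field_simps power2_eq_square)
  show ?thesis unfolding 1 2 3 4
    by (simp add: algebra_simps add_divide_distrib[symmetric] diff_divide_distrib[symmetric])
qed


context radl begin

definition GX :: "(real \<Rightarrow> real) \<Rightarrow> real \<Rightarrow> real" where "GX X s = Gk m (\<lambda>t. g (X t)) s"
definition vX :: "(real \<Rightarrow> real) \<Rightarrow> real \<Rightarrow> real" where
  "vX X r = r powr (2 - real N) * X (r powr -a)"
definition v1 :: "(real \<Rightarrow> real) \<Rightarrow> real \<Rightarrow> real" where
  "v1 X r = (2 - real N) * r powr (1 - real N) * X (r powr -a) + a * K * r powr -1 * GX X (r powr -a)"
definition v2 :: "(real \<Rightarrow> real) \<Rightarrow> real \<Rightarrow> real" where
  "v2 X r = (real N - 2) * (real N - 1) / (r^(N-2) * r^2) * X (r powr -a)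
            - (real N - 1) * a * K / r^2 * GX X (r powr -a) - k / (r^(N-2) * r^2 * (r powr a)) * g (X (r powr -a))"

lemma powr_inv_eq: "r > 0 \<Longrightarrow> x + y = 0 \<Longrightarrow> r powr x = 1 / r powr y"
  for r x y :: real
  by (metis add.commute add_diff_cancel_left' diff_0 powr_minus_divide)

lemma rn: "r > 0 \<Longrightarrow> r powr (real N - 2) = r^(N-2)"
proof -
  assume r: "r > 0"
  have n: "real (N - 2) = real N - 2" using N3 by auto
  show ?thesis using powr_realpow[OF r, of "N-2"] n by simp
qed

lemma pw:
  assumes r: "r > 0"
  shows "r powr (2 - real N) = 1 / r^(N-2)"
    "r powr (1 - real N) = 1 / (r^(N-2) * r)"
    "r powr (2 - real N - 1) = 1 / (r^(N-2) * r)"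
    "r powr (1 - real N - 1) = 1 / (r^(N-2) * r^2)"
    "r powr (-a - 1) = 1 / (r powr a * r)"
    "r powr -1 = 1 / r"
    "r powr (-1 - 1) = 1 / r^2"
    "(r powr -a) powr (-m - 1) = r^(N-2) * r powr a"
    "(r powr -a) powr m = 1 / r^(N-2)"
    "r powr (- real N - a) = 1 / (r^(N-2) * r^2 * r powr a)"
    "r powr -a = 1 / r powr a"
proof -
  have r2: "r powr 2 = r^2" using powr_realpow[OF r, of 2] by simp
  have r1: "r powr 1 = r" using r by simp
  show "r powr (2 - real N) = 1 / r^(N-2)"
    using powr_inv_eq[OF r, of "2 - real N" "real N - 2"] rn[OF r] by simp
  have "r powr (1 - real N) = 1 / r powr ((real N - 2) + 1)"
    by (rule powr_inv_eq[OF r]) simp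
  then show "r powr (1 - real N) = 1 / (r^(N-2) * r)" by (simp only: powr_add rn[OF r] r1)
  then show "r powr (2 - real N - 1) = 1 / (r^(N-2) * r)" by simp
  have "r powr (1 - real N - 1) = 1 / r powr ((real N - 2) + 2)"
    by (rule powr_inv_eq[OF r]) simp
  then show "r powr (1 - real N - 1) = 1 / (r^(N-2) * r^2)" by (simp only: powr_add rn[OF r] r2 r1)
  have "r powr (-a - 1) = 1 / r powr (a + 1)"
    by (rule powr_inv_eq[OF r]) simp
  then show "r powr (-a - 1) = 1 / (r powr a * r)" by (simp only: powr_add r1)
  show "r powr -1 = 1 / r" using r by (simp add: powr_neg_one)
  have "r powr (-1 - 1) = 1 / r powr 2"
    by (rule powr_inv_eq[OF r]) simp
  then show "r powr (-1 - 1) = 1 / r^2" by (simp add: r2)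
  have "-a * (-m - 1) = (real N - 2) + a" using am by (simp add: algebra_simps)
  then have "(r powr -a) powr (-m - 1) = r powr ((real N - 2) + a)"
    by (simp only: powr_powr)
  then show "(r powr -a) powr (-m - 1) = r^(N-2) * r powr a" by (simp only: powr_add rn[OF r] r1)
  have "-a * m = -(real N - 2)" using am by (simp add: algebra_simps)
  then have "(r powr -a) powr m = r powr (-(real N - 2))"
    by (simp only: powr_powr)
  also have "\<dots> = 1 / r powr (real N - 2)" by (rule powr_inv_eq[OF r]) simp
  finally show "(r powr -a) powr m = 1 / r^(N-2)" by (simp add: rn[OF r])
  have "r powr (- real N - a) = 1 / r powr ((real N - 2) + 2 + a)"
    by (rule powr_inv_eq[OF r]) simp
  then show "r powr (- real N - a) = 1 / (r^(N-2) * r^2 * r powr a)" by (simp only: powr_add rn[OF r] r2 r1)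
  show "r powr -a = 1 / r powr a" by (rule powr_inv_eq[OF r]) simp
qed


lemma aaK: "a * a * K = k" using a_pos by (simp add: K_def power2_eq_square)

lemma g_hom: "c > 0 \<Longrightarrow> g (c * x) = c powr p * g x"
proof -
  assume c: "c > 0"
  have "max (c * x) 0 = c * max x 0" using c by (auto simp: max_def mult_le_0_iff)
  then show ?thesis using c by (simp add: g_def powr_mult)
qed

context
  fixes X :: "real \<Rightarrow> real"
  assumes X: "isol X"
begin

lemma dX:
  assumes r: "r > 0"
  shows "((\<lambda>r. X (r powr -a)) has_real_derivative
     (-K * (r powr -a) powr (-m-1) * GX X (r powr -a)) * ((-a) * r powr (-a - 1))) (at r)"
proof -
  have s: "r powr -a > 0" using r by simp
  show ?thesis
    using DERIV_chain2[OF isol_deriv[OF X s] has_real_derivative_powr[OF r, of "-a"]]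
    by (simp add: GX_def)
qed

lemma dG:
  assumes r: "r > 0"
  shows "((\<lambda>r. GX X (r powr -a)) has_real_derivative
     ((r powr -a) powr m * g (X (r powr -a))) * ((-a) * r powr (-a - 1))) (at r)"
proof -
  have s: "r powr -a > 0" using r by simp
  show ?thesis
    using DERIV_chain2[OF isol_G_deriv[OF X s] has_real_derivative_powr[OF r, of "-a"]]
    by (simp add: GX_def[abs_def])
qed

lemma D1:
  assumes r: "r > 0"
  shows "(vX X has_real_derivative v1 X r) (at r)"
  unfolding vX_def[abs_def]
proof (rule DERIV_cong[OF DERIV_mult[OF has_real_derivative_powr[OF r, of "2 - real N"] dX[OF r]]])
  have A: "r powr a > 0" using r by simp
  show "(2 - real N) * r powr (2 - real N - 1) * X (r powr - a) +
    - K * (r powr - a) powr (- m - 1) * GX X (r powr - a) * (- a * r powr (- a - 1)) * r powr (2 - real N) =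
    v1 X r"
    unfolding v1_def
    by (simp only: pw(1-10)[OF r] alg_D1[OF _ A r] zero_less_power[OF r])
qed

lemma D2:
  assumes r: "r > 0"
  shows "(v1 X has_real_derivative v2 X r) (at r)"
  unfolding v1_def[abs_def]
proof (rule DERIV_cong[OF DERIV_add[OF DERIV_mult[OF DERIV_cmult[OF has_real_derivative_powr[OF r, of "1 - real N"]] dX[OF r]]
     DERIV_mult[OF DERIV_cmult[OF has_real_derivative_powr[OF r, of "-1"]] dG[OF r]]]])
  have A: "r powr a > 0" using r by simp
  show "(2 - real N) * ((1 - real N) * r powr (1 - real N - 1)) * X (r powr - a) +
    - K * (r powr - a) powr (- m - 1) * GX X (r powr - a) * (- a * r powr (- a - 1)) *
    ((2 - real N) * r powr (1 - real N)) +
    (a * K * (- 1 * r powr (- 1 - 1)) * GX X (r powr - a) +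
     (r powr - a) powr m * g (X (r powr - a)) * (- a * r powr (- a - 1)) * (a * K * r powr - 1)) =
    v2 X r"
    unfolding v2_def
    by (simp only: pw(1-10)[OF r] alg_D2[OF _ A r aaK[symmetric]] zero_less_power[OF r])
qed

lemma ode_val:
  assumes r: "r > 0"
  shows "v2 X r + (real N - 1) / r * v1 X r + k * r powr \<beta> * g (vX X r) = 0"
proof -
  have A: "r powr a > 0" using r by simp
  have e: "\<beta> + (2 - real N) * p = - real N - a" by (simp add: a_def algebra_simps)
  have "r powr \<beta> * (r powr (2 - real N)) powr p = r powr (- real N - a)"
    by (simp only: powr_powr flip: powr_add e)
  also have "\<dots> = 1 / (r^(N-2) * r^2 * r powr a)" by (rule pw(10)[OF r])
  finally have h: "r powr \<beta> * (r powr (2 - real N)) powr p = 1 / (r^(N-2) * r^2 * r powr a)" .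
  have gv: "g (vX X r) = (r powr (2 - real N)) powr p * g (X (r powr -a))"
    unfolding vX_def using r by (simp add: g_hom)
  have "k * r powr \<beta> * g (vX X r) = k * (r powr \<beta> * (r powr (2 - real N)) powr p) * g (X (r powr -a))"
    unfolding gv by (simp add: mult_ac)
  also have "\<dots> = k / (r^(N-2) * r^2 * r powr a) * g (X (r powr -a))"
    unfolding h by simp
  finally have F1: "k * r powr \<beta> * g (vX X r) = k / (r^(N-2) * r^2 * r powr a) * g (X (r powr -a))" .
  have F2: "(real N - 1) / r * v1 X r = (real N - 1) * (2 - real N) / (r^(N-2) * r^2) * X (r powr -a)
      + (real N - 1) * a * K / r^2 * GX X (r powr -a)"
    unfolding v1_def using r A by (simp only: pw(1-10)[OF r]) (simp add: field_simps power2_eq_square)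
  show ?thesis unfolding F1 F2 v2_def
    by (simp add: algebra_simps add_divide_distrib[symmetric] diff_divide_distrib[symmetric])
qed

lemma Xc: "continuous_on {0..} X" using X by (simp add: isol_def)

lemma X_lim_top: "((\<lambda>r. X (r powr -a)) \<longlongrightarrow> 1) at_top"
proof -
  have "((\<lambda>r::real. r powr -a) \<longlongrightarrow> 0) at_top"
    using a_pos by (intro tendsto_neg_powr filterlim_ident) auto
  moreover have "\<forall>\<^sub>F r in at_top. r powr -a \<in> {0..} - {0::real}"
    using eventually_gt_at_top[of "0::real"] by eventually_elim auto
  ultimately have f: "filterlim (\<lambda>r::real. r powr -a) (at 0 within {0..}) at_top"
    by (rule filterlim_at_withinI)
  have "(X \<longlongrightarrow> X 0) (at 0 within {0..})"
    using Xc by (simp add: continuous_on_def)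
  then have "(X \<longlongrightarrow> 1) (at 0 within {0..})" using isol_0[OF X] by simp
  from filterlim_compose[OF this f] show ?thesis .
qed

lemma vX_radial: "radial_sol N \<beta> k p (vX X)"
proof -
  have dv: "deriv (vX X) r = v1 X r" if "r > 0" for r using DERIV_imp_deriv[OF D1[OF that]] .
  have D2': "(deriv (vX X) has_real_derivative v2 X r) (at r)" if r: "r > 0" for r
    by (rule has_field_derivative_transform_within_open[OF D2[OF r], of "{0<..}"]) (use r dv in auto)
  have ddv: "deriv (deriv (vX X)) r = v2 X r" if "r > 0" for r using DERIV_imp_deriv[OF D2'[OF that]] .
  have cXs: "continuous_on {0<..} (\<lambda>r. X (r powr -a))"
    by (rule continuous_on_compose2[of "{0<..}" X])
       (auto intro!: continuous_intros continuous_on_subset[OF Xc])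
  have cG: "continuous_on {0<..} (GX X)"
    by (rule continuous_at_imp_continuous_on)
       (auto intro!: DERIV_isCont[OF isol_G_deriv[OF X]] simp: GX_def[abs_def])
  have cGs: "continuous_on {0<..} (\<lambda>r. GX X (r powr -a))"
    by (rule continuous_on_compose2[OF cG]) (auto intro!: continuous_intros)
  have cgs: "continuous_on {0<..} (\<lambda>r. g (X (r powr -a)))"
    by (rule g_cont[OF cXs])
  have cv2: "continuous_on {0<..} (v2 X)"
    unfolding v2_def[abs_def]
    by (intro continuous_intros cXs cGs cgs) auto
  have C2: "C2_on {0<..} (vX X)"
    unfolding C2_on_def
  proof (intro conjI ballI)
    fix r :: real assume "r \<in> {0<..}"
    then have r: "r > 0" by simp
    show "vX X differentiable (at r)" using D1[OF r] by (auto simp: real_differentiable_def)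
    show "deriv (vX X) differentiable (at r)" using D2'[OF r] by (auto simp: real_differentiable_def)
  next
    show "continuous_on {0<..} (deriv (deriv (vX X)))"
      using cv2 by (rule continuous_on_eq) (auto simp: ddv)
  qed
  have ode: "deriv (deriv (vX X)) r + (real N - 1) / r * deriv (vX X) r
             + k * r powr \<beta> * (max (vX X r) 0) powr p = 0" if r: "r > 0" for r
    using ode_val[OF r] by (simp add: dv[OF r] ddv[OF r] g_def)
  have ev: "\<forall>\<^sub>F r in at_top. X (r powr -a) = r ^ (N - 2) * vX X r"
    using eventually_gt_at_top[of "0::real"]
  proof eventually_elim
    case (elim r)
    then show ?case by (simp add: vX_def pw(1)[OF elim])
  qed
  have lim: "((\<lambda>r. r ^ (N - 2) * vX X r) \<longlongrightarrow> 1) at_top"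
    using X_lim_top tendsto_cong[OF ev] by simp
  show ?thesis unfolding radial_sol_def using C2 ode lim by auto
qed

end

end

lemma powr_neg_at_top:
  fixes e :: real
  assumes "e > 0"
  shows "filterlim (\<lambda>s. s powr (-e)) at_top (at_right 0)"
proof -
  have pos: "\<forall>\<^sub>F s in at_right (0::real). s > 0" by (simp add: eventually_at_filter)
  have "((\<lambda>s. s powr e) \<longlongrightarrow> 0) (at_right (0::real))"
    by (rule tendsto_zero_powrI) (use assms pos in \<open>auto intro!: tendsto_intros elim: eventually_mono\<close>)
  moreover have "\<forall>\<^sub>F s in at_right (0::real). s powr e > 0"
    using pos by eventually_elim auto
  ultimately have "filterlim (\<lambda>s. s powr e) (at_right 0) (at_right (0::real))"
    by (rule tendsto_imp_filterlim_at_right)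
  from filterlim_compose[OF filterlim_inverse_at_top_right this]
  show ?thesis by (simp add: powr_minus)
qed

lemma at0_within_Ici: "at (0::real) within {0..} = at_right 0"
proof -
  have "{0..} - {0::real} = {0<..} - {0}" by auto
  then show ?thesis by (simp add: at_within_def)
qed

context radl begin

context
  fixes w :: "real \<Rightarrow> real"
  assumes w: "radial_sol N \<beta> k p w"
begin

lemma dw: "r > 0 \<Longrightarrow> (w has_real_derivative deriv w r) (at r)"
  using w by (auto simp: radial_sol_def C2_on_def DERIV_deriv_iff_real_differentiable)

lemma dw1: "r > 0 \<Longrightarrow> (deriv w has_real_derivative deriv (deriv w) r) (at r)"
  using w by (auto simp: radial_sol_def C2_on_def DERIV_deriv_iff_real_differentiable)

lemma odew: "r > 0 \<Longrightarrow> r * deriv (deriv w) r = - (real N - 1) * deriv w r - k * (r * r powr \<beta>) * g (w r)"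
proof -
  assume r: "r > 0"
  have "deriv (deriv w) r + (real N - 1) / r * deriv w r + k * r powr \<beta> * g (w r) = 0"
    using w r by (auto simp: radial_sol_def g_def)
  moreover have "r * ((real N - 1) / r * deriv w r) = (real N - 1) * deriv w r" using r by simp
  moreover have "r * (deriv (deriv w) r + (real N - 1) / r * deriv w r + k * r powr \<beta> * g (w r))
     = r * deriv (deriv w) r + r * ((real N - 1) / r * deriv w r) + k * (r * r powr \<beta>) * g (w r)"
    by (simp only: distrib_left mult_ac)
  ultimately have "r * deriv (deriv w) r + (real N - 1) * deriv w r + k * (r * r powr \<beta>) * g (w r) = 0"
    by simp
  then show ?thesis by (simp add: algebra_simps)
qed

definition U :: "real \<Rightarrow> real" where
  "U s = (if s = 0 then 1 else s powr (-m) * w (s powr (-1/a)))"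

definition Qw :: "real \<Rightarrow> real" where
  "Qw s = -(1/a) * ((real N - 2) * w (s powr (-1/a)) + s powr (-1/a) * deriv w (s powr (-1/a)))"

lemma drho: "s > 0 \<Longrightarrow> ((\<lambda>s. s powr (-1/a)) has_real_derivative (-1/a) * s powr (-1/a - 1)) (at s)"
  by (rule has_real_derivative_powr)

lemma dU:
  assumes s: "s > 0"
  shows "(U has_real_derivative s powr (-m-1) * Qw s) (at s)"
proof -
  have rp: "s powr (-1/a) > 0" using s by simp
  have d: "((\<lambda>s. s powr (-m) * w (s powr (-1/a))) has_real_derivative
      (-m * s powr (-m - 1)) * w (s powr (-1/a)) + (deriv w (s powr (-1/a)) * ((-1/a) * s powr (-1/a - 1))) * s powr (-m)) (at s)"
    by (rule DERIV_mult[OF has_real_derivative_powr[OF s] DERIV_chain2[OF dw[OF rp] drho[OF s]]])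
  have e1: "s powr (-1/a - 1) * s powr (-m) = s powr (-m-1) * s powr (-1/a)"
    by (simp flip: powr_add add: algebra_simps)
  have e2: "m = (real N - 2) / a" by (simp add: m_def)
  have "(-m * s powr (-m - 1)) * w (s powr (-1/a)) + (deriv w (s powr (-1/a)) * ((-1/a) * s powr (-1/a - 1))) * s powr (-m)
      = s powr (-m-1) * Qw s"
    unfolding Qw_def
    using e1 a_pos by (simp add: e2 field_simps)
  with d have d': "((\<lambda>s. s powr (-m) * w (s powr (-1/a))) has_real_derivative s powr (-m-1) * Qw s) (at s)"
    by simp
  show ?thesis
    by (rule has_field_derivative_transform_within_open[OF d', of "{0<..}"]) (use s in \<open>auto simp: U_def\<close>)
qed

lemma dQw:
  assumes s: "s > 0"
  shows "(Qw has_real_derivative -K * s powr m * g (U s)) (at s)"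
proof -
  define R where "R = s powr (-1/a)"
  define D where "D = (-1/a) * s powr (-1/a - 1)"
  have R: "R > 0" using s by (simp add: R_def)
  have d: "(Qw has_real_derivative
      -(1/a) * ((real N - 2) * (deriv w R * D) + (D * deriv w R + (deriv (deriv w) R * D) * R))) (at s)"
    unfolding Qw_def[abs_def] R_def D_def
    by (intro DERIV_cmult DERIV_add DERIV_mult DERIV_chain2[OF dw] DERIV_chain2[OF dw1] drho s)
       (use s in auto)
  have "-(1/a) * ((real N - 2) * (deriv w R * D) + (D * deriv w R + (deriv (deriv w) R * D) * R))
      = -(1/a) * D * ((real N - 1) * deriv w R + R * deriv (deriv w) R)"
    by (simp add: algebra_simps)
  also have "\<dots> = -(1/a) * D * (-k * (R * R powr \<beta>) * g (w R))"
    by (subst odew[OF R]) (simp add: algebra_simps)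
  also have "\<dots> = (k/a) * D * (R * R powr \<beta>) * g (w R)"
    by (simp add: algebra_simps)
  also have "\<dots> = -K * (s powr (-1/a - 1) * (R * R powr \<beta>)) * g (w R)"
    using a_pos by (simp add: D_def K_def power2_eq_square field_simps)
  also have "s powr (-1/a - 1) * (R * R powr \<beta>) = s powr m * (s powr (-m)) powr p"
  proof -
    have ex: "(-1/a - 1) + (-1/a) + (-1/a * \<beta>) = m + -m * p"
    proof -
      have "a * ((-1/a - 1) + (-1/a) + (-1/a * \<beta>)) = -2 - a - \<beta>" using a_pos by (simp add: field_simps)
      also have "\<dots> = (real N - 2) * (1 - p)" by (simp add: a_def algebra_simps)
      also have "\<dots> = (a * m) * (1 - p)" by (simp only: am)
      also have "\<dots> = a * (m + -m * p)" by (simp add: algebra_simps)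
      finally show ?thesis using a_pos by simp
    qed
    have "s powr (-1/a - 1) * (R * R powr \<beta>) = s powr ((-1/a - 1) + (-1/a) + (-1/a * \<beta>))"
      unfolding R_def by (simp only: powr_powr powr_add)
    also have "\<dots> = s powr (m + -m * p)" by (simp only: ex)
    also have "\<dots> = s powr m * (s powr (-m)) powr p" by (simp only: powr_powr powr_add)
    finally show ?thesis .
  qed
  also have "-K * (s powr m * (s powr (-m)) powr p) * g (w R) = -K * s powr m * g (U s)"
    using s by (simp add: U_def R_def g_hom)
  finally show ?thesis using d by simp
qed

lemma U_eq: "s > 0 \<Longrightarrow> U s = (s powr (-1/a)) ^ (N - 2) * w (s powr (-1/a))"
proof -
  assume s: "s > 0"
  have "(s powr (-1/a)) ^ (N - 2) = (s powr (-1/a)) powr (real (N - 2))"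
    using s by (simp add: powr_realpow)
  also have "\<dots> = s powr (-m)" using N3 a_pos by (simp add: powr_powr m_def of_nat_diff)
  finally show ?thesis using s by (simp add: U_def)
qed

lemma Uc: "continuous_on {0..} U"
  unfolding continuous_on_eq_continuous_within
proof
  fix s :: real assume "s \<in> {0..}"
  show "continuous (at s within {0..}) U"
  proof (cases "s = 0")
    case False
    then have "s > 0" using \<open>s \<in> {0..}\<close> by auto
    then show ?thesis
      by (intro continuous_at_imp_continuous_at_within[OF DERIV_isCont[OF dU]])
  next
    case True
    have lw: "((\<lambda>r. r ^ (N - 2) * w r) \<longlongrightarrow> 1) at_top" using w by (simp add: radial_sol_def)
    have "filterlim (\<lambda>s. s powr (-(1/a))) at_top (at_right 0)"
      using a_pos by (intro powr_neg_at_top) auto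
    from filterlim_compose[OF lw this]
    have lim: "((\<lambda>s. (s powr (-1/a)) ^ (N - 2) * w (s powr (-1/a))) \<longlongrightarrow> 1) (at_right 0)" by simp
    have ev: "\<forall>\<^sub>F s in at_right 0. (s powr (-1/a)) ^ (N - 2) * w (s powr (-1/a)) = U s"
      by (simp add: eventually_at_filter U_eq)
    have "(U \<longlongrightarrow> 1) (at_right 0)" by (rule iffD1[OF tendsto_cong[OF ev] lim])
    then show ?thesis using True by (simp add: continuous_within at0_within_Ici U_def)
  qed
qed

lemma U_isol: "isol U"
proof -
  have cgU: "continuous_on {0..} (\<lambda>t. g (U t))" by (rule g_cont[OF Uc])
  have dE: "((\<lambda>s. Qw s + K * GX U s) has_real_derivative 0) (at s)" if s: "s > 0" for s
  proof -
    have "((\<lambda>s. Qw s + K * GX U s) has_real_derivative -K * s powr m * g (U s) + K * (s powr m * g (U s))) (at s)"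
      unfolding GX_def[abs_def]
      by (intro DERIV_add DERIV_cmult dQw G_deriv m_pos s cgU)
    then show ?thesis by simp
  qed
  have "\<exists>c. \<forall>s\<in>{0<..}. Qw s + K * GX U s = c"
    by (rule has_field_derivative_zero_constant) (auto intro: has_field_derivative_at_within dE)
  then obtain c where c: "\<And>s. s \<in> {0<..} \<Longrightarrow> Qw s + K * GX U s = c" by blast
  define F where "F s = U s - (1 - (K/m) * Jk m (\<lambda>t. g (U t)) s)" for s
  define H where "H s = F s + (c/m) * s powr (-m)" for s
  have dH: "(H has_real_derivative 0) (at s)" if s: "s > 0" for s
  proof -
    have "(H has_real_derivative s powr (-m-1) * Qw s - (0 - (K/m) * (m * s powr (-m-1) * Gk m (\<lambda>t. g (U t)) s))
       + (c/m) * (-m * s powr (-m - 1))) (at s)"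
      unfolding H_def[abs_def] F_def
      by (intro DERIV_add DERIV_diff DERIV_cmult dU J_deriv m_pos s cgU has_real_derivative_powr DERIV_const)
    moreover have "s powr (-m-1) * Qw s - (0 - (K/m) * (m * s powr (-m-1) * Gk m (\<lambda>t. g (U t)) s))
       + (c/m) * (-m * s powr (-m - 1)) = s powr (-m-1) * (Qw s + K * GX U s - c)"
      using m_pos by (simp add: GX_def algebra_simps)
    ultimately show ?thesis using c[of s] s by simp
  qed
  have "\<exists>d. \<forall>s\<in>{0<..}. H s = d"
    by (rule has_field_derivative_zero_constant) (auto intro: has_field_derivative_at_within dH)
  then obtain d where d: "\<And>s. s \<in> {0<..} \<Longrightarrow> H s = d" by blast
  have Fd: "F s = d - (c/m) * s powr (-m)" if "s > 0" for s using d[of s] that by (simp add: H_def)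
  have Fc: "continuous_on {0..} F"
    unfolding F_def[abs_def] by (intro continuous_intros Uc J_cont m_pos cgU)
  have F0: "F 0 = 0" by (simp add: F_def U_def Jk_def)
  have c0: "c = 0"
  proof (rule ccontr)
    assume cne: "c \<noteq> 0"
    have Fc1: "continuous_on {0..1} F" using Fc by (rule continuous_on_subset) auto
    obtain B where B: "B \<ge> 0" "\<And>s. s \<in> {0..1} \<Longrightarrow> norm (F s) \<le> B"
      using continuous_on_compact_bound[OF compact_Icc Fc1] by blast
    define Y where "Y = (\<bar>d\<bar> + B + 1) / \<bar>c/m\<bar>"
    have ev1: "\<forall>\<^sub>F s in at_right 0. s powr (-m) > Y"
      using powr_neg_at_top[OF m_pos] unfolding filterlim_at_top_dense by blast
    have ev2: "\<forall>\<^sub>F s in at_right (0::real). s \<in> {0<..1}"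
    proof -
      have "\<forall>\<^sub>F s in at_right (0::real). s < 1"
        by (rule order_tendstoD(2)[OF tendsto_ident_at]) simp
      moreover have "\<forall>\<^sub>F s in at_right (0::real). s > 0" by (simp add: eventually_at_filter)
      ultimately show ?thesis by eventually_elim auto
    qed
    from eventually_happens[OF eventually_conj[OF ev1 ev2]]
    obtain s where s: "s powr (-m) > Y" "s \<in> {0<..1}" by auto
    have "\<bar>c/m\<bar> * s powr (-m) = \<bar>d - F s\<bar>" using Fd[of s] s by (simp add: abs_mult)
    also have "\<dots> \<le> \<bar>d\<bar> + B" using B(2)[of s] s by auto
    finally have le: "\<bar>c/m\<bar> * s powr (-m) \<le> \<bar>d\<bar> + B" .
    have cm: "\<bar>c/m\<bar> > 0" using cne m_pos by simp
    have "\<bar>c/m\<bar> * Y = \<bar>d\<bar> + B + 1" unfolding Y_def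
    proof -
      have "\<And>q X::real. q > 0 \<Longrightarrow> q * (X / q) = X" by simp
      then show "\<bar>c/m\<bar> * ((\<bar>d\<bar> + B + 1) / \<bar>c/m\<bar>) = \<bar>d\<bar> + B + 1" using cm by blast
    qed
    moreover have "\<bar>c/m\<bar> * Y < \<bar>c/m\<bar> * s powr (-m)" using s(1) cm by (rule mult_strict_left_mono)
    ultimately show False using le by simp
  qed
  have d0: "d = 0"
  proof -
    have "(F \<longlongrightarrow> F 0) (at 0 within {0..})" using Fc by (simp add: continuous_on_def)
    then have l1: "(F \<longlongrightarrow> 0) (at_right 0)" by (simp add: at0_within_Ici F0)
    have ev: "\<forall>\<^sub>F s in at_right 0. F s = d" using Fd c0 by (simp add: eventually_at_filter)
    have "((\<lambda>_. d) \<longlongrightarrow> 0) (at_right (0::real))" by (rule Lim_transform_eventually[OF l1 ev])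
    then show ?thesis by (simp add: tendsto_const_iff)
  qed
  show ?thesis
    unfolding isol_def
  proof (intro conjI allI impI Uc)
    fix s :: real assume "s \<ge> 0"
    show "U s = 1 - K / m * Jk m (\<lambda>t. g (U t)) s"
    proof (cases "s = 0")
      case True then show ?thesis by (simp add: U_def Jk_def)
    next
      case False
      then have "F s = 0" using Fd[of s] c0 d0 \<open>s \<ge> 0\<close> by simp
      then show ?thesis by (simp add: F_def)
    qed
  qed
qed

lemma w_eq: "r > 0 \<Longrightarrow> w r = vX W r"
proof -
  assume r: "r > 0"
  have s: "r powr -a > 0" using r by simp
  have "W (r powr -a) = U (r powr -a)" using isol_unique[OF W_isol U_isol] s by simp
  also have "\<dots> = (r powr -a) powr (-m) * w ((r powr -a) powr (-1/a))" using s by (simp add: U_def)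
  also have "(r powr -a) powr (-1/a) = r" using r a_pos by (simp add: powr_powr)
  also have "(r powr -a) powr (-m) = r powr (real N - 2)" using am by (simp add: powr_powr)
  finally have "vX W r = r powr (2 - real N) * (r powr (real N - 2) * w r)" by (simp add: vX_def)
  also have "\<dots> = w r" by (simp add: mult.assoc[symmetric] flip: powr_add) (use r in simp)
  finally show ?thesis by simp
qed

end
end

lemma alg_P:
  fixes S s Wv Wp G K m p :: real
  assumes "S > 0" "s > 0" "Wv > 0" "p > 1"
  shows "(K^2 * (real 2 * (S * Wp * G ^ (2 - Suc 0))) * (2 * S) - K^2 * G^2 * (2 * (m * (S / s)))) / (2 * S * (2 * S)) +
     (K * (m * (S / s) * s + 1 * S) * (Wv * Wp) +
      (- K * (1 / (S * s)) * G * Wp + p * (Wp / Wv) * (- K * (1 / (S * s)) * G) * Wv) * (K * (S * s))) / (p + 1) -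
     (m / 2 * K * (- K * (1 / (S * s)) * G) * G + S * Wp * (m / 2 * K * Wv))
   = ((m+1)/(p+1) - m/2) * K * S * (Wv * Wp)"
proof -
  have 1: "(K^2 * (real 2 * (S * Wp * G ^ (2 - Suc 0))) * (2 * S) - K^2 * G^2 * (2 * (m * (S / s)))) / (2 * S * (2 * S))
     = K^2 * G * Wp - (m/2) * K^2 * G^2 / (S * s)"
    using assms by (simp add: field_simps power2_eq_square)
  have 2: "(K * (m * (S / s) * s + 1 * S) * (Wv * Wp) +
      (- K * (1 / (S * s)) * G * Wp + p * (Wp / Wv) * (- K * (1 / (S * s)) * G) * Wv) * (K * (S * s))) / (p + 1)
     = K * (m+1) / (p+1) * S * (Wv * Wp) - K^2 * G * Wp"
  proof -
    have n: "K * (m * (S / s) * s + 1 * S) * (Wv * Wp) +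
      (- K * (1 / (S * s)) * G * Wp + p * (Wp / Wv) * (- K * (1 / (S * s)) * G) * Wv) * (K * (S * s))
      = (p + 1) * (K * (m+1) / (p+1) * S * (Wv * Wp) - K^2 * G * Wp)"
      using assms by (simp add: field_simps power2_eq_square)
    have "p + 1 \<noteq> 0" using assms by simp
    then show ?thesis unfolding n by simp
  qed
  have 3: "m / 2 * K * (- K * (1 / (S * s)) * G) * G + S * Wp * (m / 2 * K * Wv)
     = - (m/2) * K^2 * G^2 / (S * s) + (m/2) * K * S * (Wv * Wp)"
    using assms by (simp add: field_simps power2_eq_square)
  show ?thesis unfolding 1 2 3 by (simp add: algebra_simps add_divide_distrib[symmetric] diff_divide_distrib[symmetric])
qed

context radl begin

definition GW :: "real \<Rightarrow> real" where "GW s = Gk m (\<lambda>t. g (W t)) s"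

lemma W0: "W 0 = 1" using isol_0[OF W_isol] .

lemma dW: "s > 0 \<Longrightarrow> (W has_real_derivative -K * s powr (-m-1) * GW s) (at s)"
  using isol_deriv[OF W_isol] by (simp add: GW_def)

lemma dGW: "s > 0 \<Longrightarrow> (GW has_real_derivative s powr m * g (W s)) (at s)"
  using isol_G_deriv[OF W_isol] by (simp add: GW_def[abs_def])

lemma cgW: "continuous_on {0..} (\<lambda>t. g (W t))" by (rule isol_cont[OF W_isol])

lemma cGint_W: "continuous_on {0..s} (\<lambda>t. t powr m * g (W t))"
  by (rule cont_Gint[OF m_pos cont_Ici_sub[OF cgW]])

lemma GW_nonneg: "s \<ge> 0 \<Longrightarrow> GW s \<ge> 0"
  unfolding GW_def Gk_def
  by (rule integral_nonneg)
     (auto intro!: integrable_continuous_interval cGint_W simp: g_nonneg)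

lemma W_antimono: "0 \<le> x \<Longrightarrow> x \<le> y \<Longrightarrow> W y \<le> W x"
proof -
  assume xy: "0 \<le> x" "x \<le> y"
  have "- W x \<le> - W y"
  proof (rule DERIV_nonneg_imp_increasing_open[OF xy(2)])
    fix t assume t: "x < t" "t < y"
    then have "t > 0" using xy by auto
    then have "((\<lambda>s. - W s) has_real_derivative - (-K * t powr (-m-1) * GW t)) (at t)"
      by (intro DERIV_minus dW)
    moreover have "- (-K * t powr (-m-1) * GW t) \<ge> 0"
      using K_pos GW_nonneg[of t] \<open>t > 0\<close> by simp
    ultimately show "\<exists>y. ((\<lambda>s. - W s) has_real_derivative y) (at t) \<and> 0 \<le> y" by blast
  next
    show "continuous_on {x..y} (\<lambda>s. - W s)"
      by (intro continuous_intros continuous_on_subset[OF W_cont]) (use xy in auto)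
  qed
  then show ?thesis by simp
qed

lemma int_tpowr:
  assumes s: "s \<ge> 0"
  shows "((\<lambda>t. t powr m) has_integral s powr (m+1) / (m+1)) {0..s}"
proof -
  have "((\<lambda>t. t powr m) has_integral (s powr (m+1) / (m+1) - 0 powr (m+1) / (m+1))) {0..s}"
  proof (rule fundamental_theorem_of_calculus_interior[OF s])
    show "continuous_on {0..s} (\<lambda>t. t powr (m+1) / (m+1))"
      using m_pos by (intro continuous_intros cont_tpowr) auto
    fix t assume "t \<in> {0<..<s}"
    then have t: "t > 0" by simp
    have "((\<lambda>t. t powr (m+1) / (m+1)) has_real_derivative ((m+1) * t powr (m+1-1)) / (m+1)) (at t)"
      by (intro DERIV_cdivide has_real_derivative_powr t)
    then have "((\<lambda>t. t powr (m+1) / (m+1)) has_real_derivative t powr m) (at t)"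
      using m_pos by simp
    then show "((\<lambda>t. t powr (m+1) / (m+1)) has_vector_derivative t powr m) (at t)"
      by (simp add: has_real_derivative_iff_has_vector_derivative)
  qed
  then show ?thesis using m_pos by simp
qed

context
  assumes nz: "\<And>s. s > 0 \<Longrightarrow> W s \<noteq> 0"
begin

lemma Wpos: "s \<ge> 0 \<Longrightarrow> W s > 0"
proof (rule ccontr)
  assume s: "s \<ge> 0" "\<not> W s > 0"
  then have "s \<noteq> 0" using W0 by auto
  then have s0: "s > 0" using s by auto
  have "\<exists>x. 0 \<le> x \<and> x \<le> s \<and> W x = 0"
    by (rule IVT2') (use s W0 in \<open>auto intro: continuous_on_subset[OF W_cont]\<close>)
  then obtain x where x: "0 \<le> x" "x \<le> s" "W x = 0" by blast
  then have "x \<noteq> 0" using W0 by auto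
  then show False using nz[of x] x by auto
qed

lemma gW: "s \<ge> 0 \<Longrightarrow> g (W s) = W s powr p"
  using Wpos[of s] by (simp add: g_def)

lemma GW_upper: "s \<ge> 0 \<Longrightarrow> GW s \<le> s powr (m+1) / (m+1)"
proof -
  assume s: "s \<ge> 0"
  have "GW s \<le> integral {0..s} (\<lambda>t. t powr m)"
    unfolding GW_def Gk_def
  proof (rule integral_le)
    show "(\<lambda>t. t powr m * g (W t)) integrable_on {0..s}"
      by (rule integrable_continuous_interval[OF cGint_W])
    show "(\<lambda>t. t powr m) integrable_on {0..s}" using int_tpowr[OF s] by blast
    fix t assume t: "t \<in> {0..s}"
    have "g (W t) \<le> 1" using gW[of t] Wpos[of t] isol_le1[OF W_isol, of t] t p_gt1
      by (auto intro: powr_le1)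
    then show "t powr m * g (W t) \<le> t powr m" using mult_left_mono[OF \<open>g (W t) \<le> 1\<close>, of "t powr m"] by simp
  qed
  also have "\<dots> = s powr (m+1) / (m+1)" using int_tpowr[OF s] by (rule integral_unique)
  finally show ?thesis .
qed

lemma GW_lower: "s \<ge> 0 \<Longrightarrow> GW s \<ge> W s powr p * (s powr (m+1) / (m+1))"
proof -
  assume s: "s \<ge> 0"
  have "integral {0..s} (\<lambda>t. W s powr p * t powr m) \<le> GW s"
    unfolding GW_def Gk_def
  proof (rule integral_le)
    show "(\<lambda>t. t powr m * g (W t)) integrable_on {0..s}"
      by (rule integrable_continuous_interval[OF cGint_W])
    show "(\<lambda>t. W s powr p * t powr m) integrable_on {0..s}"
      by (rule integrable_continuous_interval[OF continuous_on_mult[OF continuous_on_const cont_tpowr[OF m_pos]]]) auto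
    fix t assume t: "t \<in> {0..s}"
    have "W s powr p \<le> W t powr p"
      using W_antimono[of t s] t Wpos[of s] p_gt1 by (intro powr_mono2) auto
    then show "W s powr p * t powr m \<le> t powr m * g (W t)"
      using t gW[of t] mult_left_mono[OF \<open>W s powr p \<le> W t powr p\<close>, of "t powr m"] by (simp add: mult.commute)
  qed
  moreover have "integral {0..s} (\<lambda>t. W s powr p * t powr m) = W s powr p * (s powr (m+1) / (m+1))"
    using int_tpowr[OF s] by (simp add: integral_unique)
  ultimately show ?thesis by simp
qed

definition "K1 = K / (m + 1)"
lemma K1_pos: "K1 > 0" using K_pos m_pos by (simp add: K1_def)

lemma dW_le:
  assumes s: "s > 0"
  shows "-K * s powr (-m-1) * GW s \<le> -K1 * W s powr p"
proof -
  have "K * s powr (-m-1) * (W s powr p * (s powr (m+1) / (m+1))) \<le> K * s powr (-m-1) * GW s"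
    using GW_lower[of s] s K_pos by (intro mult_left_mono) auto
  moreover have "K * s powr (-m-1) * (W s powr p * (s powr (m+1) / (m+1))) = K1 * W s powr p"
  proof -
    have "s powr (-m-1) * s powr (m+1) = 1" using s by (simp flip: powr_add)
    then show ?thesis by (simp add: K1_def field_simps)
  qed
  ultimately show ?thesis by simp
qed

lemma decay:
  assumes s: "s \<ge> 0"
  shows "W s powr (1-p) \<ge> 1 + (p-1) * K1 * s"
proof -
  define h where "h t = W t powr (1-p) - (p-1) * K1 * t" for t
  have "h 0 \<le> h s"
  proof (rule DERIV_nonneg_imp_increasing_open[OF s])
    fix t assume t: "0 < t" "t < s"
    have Wt: "W t > 0" using Wpos[of t] t by simp
    have d: "(h has_real_derivative (1-p) * W t powr (1-p - of_nat 1) * (-K * t powr (-m-1) * GW t) - (p-1) * K1 * 1) (at t)"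
      unfolding h_def[abs_def]
      by (intro DERIV_diff DERIV_fun_powr dW DERIV_cmult DERIV_ident Wt t)
    have "W t powr (1-p - of_nat 1) * W t powr p = 1" using Wt by (simp flip: powr_add)
    moreover have "W t powr (1-p - of_nat 1) \<ge> 0" by simp
    ultimately have "W t powr (1-p - of_nat 1) * (-K * t powr (-m-1) * GW t) \<le> W t powr (1-p - of_nat 1) * (-K1 * W t powr p)"
      using dW_le[OF t(1)] by (intro mult_left_mono) auto
    also have "\<dots> = -K1" using \<open>W t powr (1-p - of_nat 1) * W t powr p = 1\<close> by (simp add: algebra_simps)
    finally have "(1-p) * (W t powr (1-p - of_nat 1) * (-K * t powr (-m-1) * GW t)) \<ge> (1-p) * (-K1)"
      using p_gt1 by (intro mult_left_mono_neg) auto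
    then have "(1-p) * W t powr (1-p - of_nat 1) * (-K * t powr (-m-1) * GW t) - (p-1) * K1 * 1 \<ge> 0"
      by (simp add: algebra_simps)
    then show "\<exists>y. (h has_real_derivative y) (at t) \<and> 0 \<le> y" using d by blast
  next
    show "continuous_on {0..s} h"
    proof -
      have nz0: "\<forall>x\<in>{0..s}. W x \<noteq> 0" using Wpos by (metis atLeastAtMost_iff less_irrefl)
      show ?thesis unfolding h_def[abs_def]
        by (intro continuous_intros continuous_on_subset[OF W_cont] nz0) auto
    qed
  qed
  then show ?thesis by (simp add: h_def W0)
qed

definition "c3 = 1 / ((p-1) * K1)"

lemma decay2:
  assumes s: "s > 0"
  shows "W s powr (p-1) \<le> c3 / s"
proof -
  have pos: "(p-1) * K1 * s > 0" using p_gt1 K1_pos s by simp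
  have "W s powr (1-p) \<ge> (p-1) * K1 * s" using decay[of s] s by simp
  then have "1 / W s powr (1-p) \<le> 1 / ((p-1) * K1 * s)"
    using pos Wpos[of s] s by (intro divide_left_mono) auto
  moreover have "W s powr (p-1) = 1 / W s powr (1-p)"
    using Wpos[of s] s by (intro powr_inv_eq) auto
  ultimately show ?thesis by (simp add: c3_def)
qed

definition P :: "real \<Rightarrow> real" where
  "P s = K^2 * GW s ^ 2 / (2 * s powr m) + K * (s powr m * s) * (W s * W s powr p) / (p+1) - m/2 * K * W s * GW s"

definition "c0 = (m+1)/(p+1) - m/2"

lemma c0_pos: "c0 > 0"
proof -
  have "m * (p + 1) < 2 * (m + 1)" using subcrit by (simp add: algebra_simps)
  then show ?thesis using p_gt1 by (simp add: c0_def field_simps)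
qed

lemma dP:
  assumes s: "s > 0"
  shows "(P has_real_derivative c0 * K * s powr m * (W s * W s powr p)) (at s)"
proof -
  have Ws: "W s > 0" using Wpos[of s] s by simp
  have nz2: "2 * s powr m \<noteq> 0" using s by simp
  note dA = DERIV_divide[OF DERIV_cmult[OF DERIV_power[OF dGW[OF s]]] DERIV_cmult[OF has_real_derivative_powr[OF s]] nz2]
  note dB = DERIV_cdivide[OF DERIV_mult[OF DERIV_cmult[OF DERIV_mult[OF has_real_derivative_powr[OF s] DERIV_ident]]
              DERIV_mult[OF dW[OF s] DERIV_fun_powr[OF dW[OF s] Ws]]]]
  note dC = DERIV_mult[OF DERIV_cmult[OF dW[OF s]] dGW[OF s]]
  note d = DERIV_diff[OF DERIV_add[OF dA dB] dC]
  show ?thesis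
    unfolding P_def[abs_def]
  proof (rule DERIV_cong[OF d])
    have f1: "s powr (m - 1) = s powr m / s" using s by (simp add: powr_diff)
    have f2: "s powr (- m - 1) = 1 / (s powr m * s)"
      using s by (simp add: powr_diff powr_minus_divide)
    have f3: "W s powr (p - real 1) = W s powr p / W s" using Ws by (simp add: powr_diff)
    have f4: "g (W s) = W s powr p" using gW[of s] s by simp
    have Sp: "s powr m > 0" using s by simp
    show "(K\<^sup>2 * (real 2 * (s powr m * g (W s) * GW s ^ (2 - Suc 0))) * (2 * s powr m) -
      K\<^sup>2 * (GW s)\<^sup>2 * (2 * (m * s powr (m - 1)))) / (2 * s powr m * (2 * s powr m)) +
      (K * (m * s powr (m - 1) * s + 1 * s powr m) * (W s * W s powr p) +
      (- K * s powr (- m - 1) * GW s * W s powr p +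
       p * W s powr (p - real 1) * (- K * s powr (- m - 1) * GW s) * W s) * (K * (s powr m * s))) / (p + 1) -
      (m / 2 * K * (- K * s powr (- m - 1) * GW s) * GW s + s powr m * g (W s) * (m / 2 * K * W s)) =
      c0 * K * s powr m * (W s * W s powr p)"
      unfolding f1 f2 f3 f4 c0_def
      by (rule alg_P[OF Sp s Ws p_gt1])
  qed
qed

lemma P_strict:
  assumes "0 < x" "x < y"
  shows "P x < P y"
proof -
  obtain z where z: "x < z" "z < y" "P y - P x = (y - x) * (c0 * K * z powr m * (W z * W z powr p))"
    using MVT2[OF assms(2), of P "\<lambda>z. c0 * K * z powr m * (W z * W z powr p)"] dP assms by force
  have "c0 * K * z powr m * (W z * W z powr p) > 0"
    using c0_pos K_pos Wpos[of z] z assms by simp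
  then have "(y - x) * (c0 * K * z powr m * (W z * W z powr p)) > 0" using z by (intro mult_pos_pos[of "y - x"]) auto
  then show ?thesis using z by simp
qed

lemma P_lower:
  assumes e: "e > 0"
  shows "P e \<ge> - (m/2 * K * (e powr (m+1) / (m+1)))"
proof -
  have A: "K^2 * GW e ^ 2 / (2 * e powr m) \<ge> 0" using e by simp
  have B: "K * (e powr m * e) * (W e * W e powr p) / (p+1) \<ge> 0"
    using e K_pos Wpos[of e] p_gt1 by simp
  have "W e * GW e \<le> 1 * (e powr (m+1) / (m+1))"
    using isol_le1[OF W_isol, of e] GW_upper[of e] GW_nonneg[of e] e Wpos[of e]
    by (intro mult_mono) auto
  then have "m/2 * K * (W e * GW e) \<le> m/2 * K * (e powr (m+1) / (m+1))"
    using m_pos K_pos by (intro mult_left_mono) auto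
  then have C: "m/2 * K * W e * GW e \<le> m/2 * K * (e powr (m+1) / (m+1))" by (simp add: mult.assoc)
  show ?thesis unfolding P_def using A B C by linarith
qed

lemma P_half: "P (1/2) \<ge> 0"
proof (rule ccontr)
  assume neg: "\<not> P (1/2) \<ge> 0"
  have "((\<lambda>e. m/2 * K * (e powr (m+1) / (m+1))) \<longlongrightarrow> m/2 * K * (0 powr (m+1) / (m+1))) (at_right (0::real))"
    using m_pos by (intro tendsto_intros tendsto_zero_powrI) (auto simp: eventually_at_filter)
  then have "((\<lambda>e. m/2 * K * (e powr (m+1) / (m+1))) \<longlongrightarrow> 0) (at_right (0::real))" by simp
  then have ev1: "\<forall>\<^sub>F e in at_right (0::real). m/2 * K * (e powr (m+1) / (m+1)) < - P (1/2)"
    using neg by (intro order_tendstoD(2)) auto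
  have ev2: "\<forall>\<^sub>F e in at_right (0::real). e \<in> {0<..<1/2}"
  proof -
    have "\<forall>\<^sub>F s in at_right (0::real). s < 1/2"
      by (rule order_tendstoD(2)[OF tendsto_ident_at]) simp
    moreover have "\<forall>\<^sub>F s in at_right (0::real). s > 0" by (simp add: eventually_at_filter)
    ultimately show ?thesis by eventually_elim auto
  qed
  from eventually_happens[OF eventually_conj[OF ev1 ev2]]
  obtain e where e: "m/2 * K * (e powr (m+1) / (m+1)) < - P (1/2)" "e \<in> {0<..<1/2}" by auto
  have "P e < P (1/2)" using e by (intro P_strict) auto
  moreover have "P e \<ge> - (m/2 * K * (e powr (m+1) / (m+1)))" using e by (intro P_lower) auto
  ultimately show False using e by simp
qed

lemma P1_pos: "P 1 > 0"
  using P_half P_strict[of "1/2" 1] by simp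

definition "C2 = 2 powr (m+2) / 2 + K * c3 * 2 powr m / (p+1)"

lemma c3_pos: "c3 > 0" using p_gt1 K1_pos by (simp add: c3_def)

lemma P_bound:
  assumes R: "R \<ge> 1"
  shows "\<exists>xi>R. P xi \<le> C2 * ((W R)^2 * R powr m)"
proof -
  have R0: "R > 0" using R by simp
  obtain xi where xi: "R < xi" "xi < 2*R" "W (2*R) - W R = (2*R - R) * (-K * xi powr (-m-1) * GW xi)"
    using MVT2[of R "2*R" W "\<lambda>x. -K * x powr (-m-1) * GW x"] dW R0 by force
  have xi0: "xi > 0" using xi R0 by simp
  have WR: "W R > 0" "W (2*R) > 0" "W xi > 0" using Wpos R0 xi0 by auto
  have Wxi: "W xi \<le> W R" using W_antimono[of R xi] xi R0 by simp
  have e1: "xi powr (m+1) * xi powr (-m-1) = 1" using xi0 by (simp flip: powr_add)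
  have KG: "K * GW xi = xi powr (m+1) * ((W R - W (2*R)) / R)"
  proof -
    have "(W R - W (2*R)) / R = K * xi powr (-m-1) * GW xi" using xi(3) R0 by (simp add: field_simps)
    then have "xi powr (m+1) * ((W R - W (2*R)) / R) = (xi powr (m+1) * xi powr (-m-1)) * (K * GW xi)"
      by (simp add: mult_ac)
    then show ?thesis using e1 by simp
  qed
  have KG0: "K * GW xi \<ge> 0" using K_pos GW_nonneg[of xi] xi0 by simp
  have KGle: "K * GW xi \<le> xi powr (m+1) * (W R / R)"
    unfolding KG using WR R0 by (intro mult_left_mono divide_right_mono) auto
  have T1: "K^2 * GW xi ^ 2 / (2 * xi powr m) \<le> 2 powr (m+2) / 2 * ((W R)^2 * R powr m)"
  proof -
    have "K^2 * GW xi ^ 2 = (K * GW xi)^2" by (simp add: power_mult_distrib)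
    also have "\<dots> \<le> (xi powr (m+1) * (W R / R))^2" using KG0 KGle by (intro power_mono) auto
    finally have "K^2 * GW xi ^ 2 / (2 * xi powr m) \<le> (xi powr (m+1) * (W R / R))^2 / (2 * xi powr m)"
      using xi0 by (intro divide_right_mono) auto
    also have "(xi powr (m+1) * (W R / R))^2 / (2 * xi powr m) = xi powr m * xi^2 * (W R)^2 / (2 * R^2)"
    proof -
      have a1: "xi powr (m+1) = xi powr m * xi" using xi0 by (simp add: powr_add)
      have S: "xi powr m > 0" using xi0 by simp
      have gen: "\<And>S x w. S > 0 \<Longrightarrow> (S * x * (w / R))^2 / (2 * S) = S * x^2 * w^2 / (2 * R^2)"
        using R0 by (simp add: power2_eq_square field_simps)
      show ?thesis unfolding a1 using gen[OF S] .
    qed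
    also have "\<dots> \<le> (2*R) powr m * (2*R)^2 * (W R)^2 / (2 * R^2)"
    proof -
      have "xi powr m \<le> (2*R) powr m" using xi m_pos by (intro powr_mono2) auto
      moreover have "xi^2 \<le> (2*R)^2" using xi xi0 by (intro power_mono) auto
      ultimately have "xi powr m * xi^2 \<le> (2*R) powr m * (2*R)^2" using xi0 by (intro mult_mono) auto
      then show ?thesis using R0 by (intro divide_right_mono mult_right_mono) auto
    qed
    also have "(2*R) powr m * (2*R)^2 * (W R)^2 / (2 * R^2) = 2 powr (m+2) / 2 * ((W R)^2 * R powr m)"
    proof -
      have "2 powr (m+2) = 2 powr m * 4" by (simp add: powr_add)
      then show ?thesis using R0 by (simp add: powr_mult power_mult_distrib field_simps)
    qed
    finally show ?thesis .
  qed
  have T2: "K * (xi powr m * xi) * (W xi * W xi powr p) / (p+1) \<le> K * c3 * 2 powr m / (p+1) * ((W R)^2 * R powr m)"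
  proof -
    have "W xi powr (p - 1 + 1) = W xi powr (p-1) * W xi powr 1" by (rule powr_add)
    then have "W xi powr p = W xi powr (p-1) * W xi" using WR by simp
    also have "\<dots> \<le> (c3 / xi) * W xi" using decay2[OF xi0] WR by (intro mult_right_mono) auto
    finally have wp: "W xi powr p \<le> (c3 / xi) * W xi" .
    have "K * (xi powr m * xi) * (W xi * W xi powr p) \<le> K * (xi powr m * xi) * (W xi * ((c3 / xi) * W xi))"
      using wp WR K_pos xi0 by (intro mult_left_mono) auto
    also have "\<dots> = K * c3 * xi powr m * (W xi)^2" using xi0 by (simp add: field_simps power2_eq_square)
    also have "\<dots> \<le> K * c3 * (2*R) powr m * (W R)^2"
    proof -
      have "xi powr m \<le> (2*R) powr m" using xi m_pos by (intro powr_mono2) auto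
      moreover have "(W xi)^2 \<le> (W R)^2" using Wxi WR by (intro power_mono) auto
      ultimately show ?thesis using K_pos c3_pos xi0 by (intro mult_left_mono mult_mono) auto
    qed
    also have "\<dots> = K * c3 * 2 powr m * ((W R)^2 * R powr m)" using R0 by (simp add: powr_mult)
    finally have "K * (xi powr m * xi) * (W xi * W xi powr p) \<le> K * c3 * 2 powr m * ((W R)^2 * R powr m)" .
    then show ?thesis using p_gt1 by (simp add: divide_right_mono)
  qed
  have T3: "m/2 * K * W xi * GW xi \<ge> 0" using m_pos K_pos WR GW_nonneg[of xi] xi0 by simp
  have "P xi \<le> C2 * ((W R)^2 * R powr m)"
    unfolding P_def C2_def using T1 T2 T3 by (simp add: algebra_simps)
  then show ?thesis using xi by blast
qed

lemma Y_lim: "((\<lambda>R. (W R)^2 * R powr m) \<longlongrightarrow> 0) at_top"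
proof (rule Lim_null_comparison)
  define e2 where "e2 = 2 / (p - 1)"
  have e2: "e2 > 0" "(p - 1) * e2 = 2" using p_gt1 by (auto simp: e2_def field_simps)
  have me: "m - e2 < 0" using subcrit p_gt1 by (simp add: e2_def field_simps)
  show "\<forall>\<^sub>F R in at_top. norm ((W R)^2 * R powr m) \<le> c3 powr e2 * R powr (m - e2)"
    using eventually_gt_at_top[of "0::real"]
  proof eventually_elim
    case (elim R)
    have WR: "W R > 0" using Wpos[of R] elim by simp
    have q1: "(W R powr (p-1)) powr e2 = W R powr 2" by (simp only: powr_powr e2(2))
    have q2: "W R powr (2::real) = (W R)^2" using powr_realpow[OF WR, of 2] by simp
    have "(W R)^2 = (W R powr (p-1)) powr e2" using q1 q2 by simp
    also have "\<dots> \<le> (c3 / R) powr e2" using decay2[OF elim] e2 by (intro powr_mono2) auto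
    also have "\<dots> = c3 powr e2 * R powr (-e2)"
      using elim c3_pos by (simp add: powr_divide powr_minus_divide)
    finally have "(W R)^2 * R powr m \<le> c3 powr e2 * R powr (-e2) * R powr m"
      by (intro mult_right_mono) auto
    also have "\<dots> = c3 powr e2 * R powr (m - e2)"
    proof -
      have "R powr (-e2) * R powr m = R powr (-e2 + m)" by (rule powr_add[symmetric])
      then show ?thesis by (simp add: mult.assoc)
    qed
    finally show ?case using WR by simp
  qed
  show "((\<lambda>R. c3 powr e2 * R powr (m - e2)) \<longlongrightarrow> 0) at_top"
    using tendsto_mult[OF tendsto_const tendsto_neg_powr[OF me filterlim_ident]] by simp
qed

lemma nz_False: False
proof -
  have "((\<lambda>R. C2 * ((W R)^2 * R powr m)) \<longlongrightarrow> C2 * 0) at_top"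
    by (intro tendsto_mult tendsto_const Y_lim)
  then have ev1: "\<forall>\<^sub>F R in at_top. C2 * ((W R)^2 * R powr m) < P 1"
    using P1_pos by (intro order_tendstoD(2)) auto
  from eventually_happens[OF eventually_conj[OF ev1 eventually_ge_at_top[of 1]]]
  obtain R where R: "C2 * ((W R)^2 * R powr m) < P 1" "R \<ge> 1" by auto
  obtain xi where xi: "xi > R" "P xi \<le> C2 * ((W R)^2 * R powr m)" using P_bound[OF R(2)] by blast
  have "P 1 < P xi" using xi R by (intro P_strict) auto
  then show False using xi R by simp
qed

end

lemma W_zero: "\<exists>s>0. W s = 0"
  using nz_False by blast

end

context radl begin

lemma vX_zero_iff: "r > 0 \<Longrightarrow> vX W r = 0 \<longleftrightarrow> W (r powr -a) = 0"
  by (simp add: vX_def)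

lemma W_pos_near0: "\<exists>d>0. \<forall>s. 0 \<le> s \<and> s < d \<longrightarrow> W s > 0"
proof -
  have "(W \<longlongrightarrow> W 0) (at 0 within {0..})" using W_cont by (simp add: continuous_on_def)
  then have "\<forall>\<^sub>F s in at 0 within {0..}. W s > 0" using W0 by (intro order_tendstoD(1)) auto
  then obtain d where d: "d > 0" "\<And>x. x \<in> {0..} \<Longrightarrow> x \<noteq> 0 \<Longrightarrow> dist x 0 < d \<Longrightarrow> W x > 0"
    unfolding eventually_at by blast
  show ?thesis
  proof (intro exI[of _ d] conjI allI impI d(1))
    fix s :: real assume s: "0 \<le> s \<and> s < d"
    show "W s > 0"
    proof (cases "s = 0")
      case True then show ?thesis using W0 by simp
    next
      case False then show ?thesis using d(2)[of s] s by (auto simp: dist_real_def)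
    qed
  qed
qed

lemma zero_set:
  "{r. r > 0 \<and> vX W r = 0} \<noteq> {} \<and> bdd_above {r. r > 0 \<and> vX W r = 0} \<and> Sup {r. r > 0 \<and> vX W r = 0} > 0"
proof -
  define Z where "Z = {r. r > 0 \<and> vX W r = 0}"
  obtain s0 where s0: "s0 > 0" "W s0 = 0" using W_zero by blast
  define r0 where "r0 = s0 powr (-1/a)"
  have r0: "r0 > 0" using s0 by (simp add: r0_def)
  have "r0 powr -a = s0" using s0 a_pos by (simp add: r0_def powr_powr)
  then have r0Z: "r0 \<in> Z" using r0 s0 by (simp add: Z_def vX_zero_iff)
  obtain d where d: "d > 0" "\<And>s. 0 \<le> s \<Longrightarrow> s < d \<Longrightarrow> W s > 0" using W_pos_near0 by blast
  have bd: "r \<le> d powr (-1/a)" if "r \<in> Z" for r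
  proof -
    have r: "r > 0" "W (r powr -a) = 0" using that by (auto simp: Z_def vX_zero_iff)
    have "r powr -a \<ge> d"
    proof (rule ccontr)
      assume "\<not> r powr -a \<ge> d"
      then have "W (r powr -a) > 0" using d(2)[of "r powr -a"] by simp
      then show False using r by simp
    qed
    then have "(r powr -a) powr (-1/a) \<le> d powr (-1/a)"
      using d a_pos by (intro powr_mono2') auto
    moreover have "(r powr -a) powr (-1/a) = r" using r a_pos by (simp add: powr_powr)
    ultimately show ?thesis by simp
  qed
  have bdd: "bdd_above Z" using bd by (intro bdd_aboveI[where M = "d powr (-1/a)"]) blast
  have "r0 \<le> Sup Z" by (rule cSup_upper[OF r0Z bdd])
  then show ?thesis using r0Z bdd r0 unfolding Z_def by auto
qed

end

theorem lemma6p3: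
  fixes N :: nat and \<beta> k p :: real
  assumes "N \<ge> 3" and "\<beta> > -2" and "k > 0" and "p > p_S N \<beta>"
  shows "\<exists>v. radial_sol N \<beta> k p v
            \<and> (\<forall>w. radial_sol N \<beta> k p w \<longrightarrow> (\<forall>r>0. w r = v r))
            \<and> {r. r > 0 \<and> v r = 0} \<noteq> {}
            \<and> bdd_above {r. r > 0 \<and> v r = 0}
            \<and> Sup {r. r > 0 \<and> v r = 0} > 0"
proof -
  interpret radl N \<beta> k p using assms by unfold_locales
  show ?thesis
  proof (intro exI[of _ "vX W"] conjI allI impI)
    show "radial_sol N \<beta> k p (vX W)" by (rule vX_radial[OF W_isol])
    fix w :: "real \<Rightarrow> real" and r :: real assume "radial_sol N \<beta> k p w" "r > 0"
    then show "w r = vX W r" by (rule w_eq)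
  qed (use zero_set in auto)
qed

end
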